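(* Let $(\xi,\eta)$ be a random vector with marginal distributions $U$ (of $\xi$) and $V$ (of $\eta$) on $(0,\infty)$, conditionally dependent with a continuous positive function $s_0$ on $(0,\infty)$ (i.e. $\mathrm P(\xi>x\mid\eta=y)\sim\overline U(x)s_0(y)$ uniformly in $y\in D_\eta$), with $U\in\mathscr L$. Let $X=\xi-\eta$, $Y=\eta$, let $F$ and $G$ be the distributions of $X$ and $Y$, and let $s(y)=s_0(y)/\mathrm E s_0(Y)$. Assume $F\in\mathscr R_{-\alpha}$ for some $\alpha\ge0$ with $\overline F(x)\sim x^{-\alpha}L(x)$, $L$ positive slowly varying, $\overline G(x)=o(\overline F(x))$, and either (i) $\mathrm E(Y^{\alpha+\varepsilon}s(Y))<\infty$ for some $\varepsilon>0$, or (ii) there is a positive function $g$ with $g(x)\downarrow0$, $xg(x)\uparrow\infty$, $\overline G(xg(x))=o(\overline F(x))$ and $\limsup_{x\to\infty}\sup_{1\le y\le xg(x)}L(x/y)/L(x)<\infty$, and $\mathrm E(Y^\alpha s(Y))<\infty$. Then $\mathrm P(XY>x)\sim\mathrm E(Y^\alpha s(Y))\overline F(x)$ as $x\to\infty$.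
   Context: For a random vector $(A,B)$, $A$ real-valued with distribution $F_A$, $\overline{F_A}>0$ everywhere, $B$ with values in $(0,\infty)$: $D_B=\{y>0:\mathrm P(B\in(y-\delta,y+\delta))>0\ \forall\delta>0\}$; for $y\in D_B$, $\mathrm P(A>x\mid B=y)=\lim_{t\downarrow0}\mathrm P(A>x,B\in[y,y+t))/\mathrm P(B\in[y,y+t))$ when the limit exists; $(A,B)$ is conditionally dependent with positive measurable function $s$ if these exist and $\lim_{x\to\infty}\sup_{y\in D_B}|\mathrm P(A>x\mid B=y)/(\overline{F_A}(x)s(y))-1|=0$. $U\in\mathscr L$ means $\overline U(x-t)/\overline U(x)\to1$ for each $t>0$. $F\in\mathscr R_{-\alpha}$ means $\overline F(xy)/\overline F(x)\to y^{-\alpha}$ for each $y>0$. *)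

theory Defs
  imports "HOL-Probability.Probability"
begin

definition ccdf :: "real measure \<Rightarrow> real \<Rightarrow> real" where
  "ccdf N x = measure N {x<..}"

definition rv_tail :: "'a measure \<Rightarrow> ('a \<Rightarrow> real) \<Rightarrow> real \<Rightarrow> real" where
  "rv_tail M A x = measure M {\<omega> \<in> space M. A \<omega> > x}"

text \<open>The set D_B of points of increase of B in (0,infinity).\<close>
definition supp_pts :: "'a measure \<Rightarrow> ('a \<Rightarrow> real) \<Rightarrow> real set" where
  "supp_pts M B = {y. y > 0 \<and> (\<forall>\<delta>>0. measure M {\<omega> \<in> space M. B \<omega> \<in> {y - \<delta><..<y + \<delta>}} > 0)}"

text \<open>P(A > x | B = y) exists and equals p: the limit of the ratio as t tends to 0 from
  the right, where the ratio is required to be well defined (positive denominator).\<close>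
definition has_cond_tail ::
  "'a measure \<Rightarrow> ('a \<Rightarrow> real) \<Rightarrow> ('a \<Rightarrow> real) \<Rightarrow> real \<Rightarrow> real \<Rightarrow> real \<Rightarrow> bool" where
  "has_cond_tail M A B x y p \<longleftrightarrow>
     (\<forall>\<^sub>F t in at_right 0. measure M {\<omega> \<in> space M. B \<omega> \<in> {y..<y + t}} > 0) \<and>
     ((\<lambda>t. measure M {\<omega> \<in> space M. A \<omega> > x \<and> B \<omega> \<in> {y..<y + t}}
            / measure M {\<omega> \<in> space M. B \<omega> \<in> {y..<y + t}}) \<longlongrightarrow> p) (at_right 0)"

definition cond_dependent ::
  "'a measure \<Rightarrow> ('a \<Rightarrow> real) \<Rightarrow> ('a \<Rightarrow> real) \<Rightarrow> (real \<Rightarrow> real) \<Rightarrow> bool" where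
  "cond_dependent M A B s \<longleftrightarrow>
     (\<forall>x. rv_tail M A x > 0) \<and>
     (\<forall>y>0. s y > 0) \<and> s \<in> borel_measurable (restrict_space borel {0<..}) \<and>
     (\<exists>c. (\<forall>x. \<forall>y\<in>supp_pts M B. has_cond_tail M A B x y (c x y)) \<and>
          (\<forall>e>0. \<forall>\<^sub>F x in at_top. \<forall>y\<in>supp_pts M B.
               \<bar>c x y / (rv_tail M A x * s y) - 1\<bar> \<le> e))"

definition long_tailed :: "real measure \<Rightarrow> bool" where
  "long_tailed N \<longleftrightarrow> (\<forall>t>0. ((\<lambda>x. ccdf N (x - t) / ccdf N x) \<longlongrightarrow> 1) at_top)"

definition reg_var :: "real \<Rightarrow> real measure \<Rightarrow> bool" where
  "reg_var \<alpha> N \<longleftrightarrow> (\<forall>y>0. ((\<lambda>x. ccdf N (x * y) / ccdf N x) \<longlongrightarrow> y powr (- \<alpha>)) at_top)"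

definition slowly_varying :: "(real \<Rightarrow> real) \<Rightarrow> bool" where
  "slowly_varying L \<longleftrightarrow> (\<forall>x>0. L x > 0) \<and>
     (\<forall>y>0. ((\<lambda>x. L (x * y) / L x) \<longlongrightarrow> 1) at_top)"

end

theory Submission
  imports Defs "HOL-Probability.Probability"
begin


lemma creep:
  fixes f g :: "real \<Rightarrow> real \<Rightarrow> real" and a b :: real
  assumes ab: "a \<le> b"
    and addf: "\<And>u v w. a \<le> u \<Longrightarrow> u \<le> v \<Longrightarrow> v \<le> w \<Longrightarrow> f u w = f u v + f v w"
    and addg: "\<And>u v w. a \<le> u \<Longrightarrow> u \<le> v \<Longrightarrow> v \<le> w \<Longrightarrow> g u w = g u v + g v w"
    and lcf: "\<And>w. a < w \<Longrightarrow> w \<le> b \<Longrightarrow> (\<lambda>n. f a (w - (w-a)/(real n + 1))) \<longlonglongrightarrow> f a w"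
    and lcg: "\<And>w. a < w \<Longrightarrow> w \<le> b \<Longrightarrow> (\<lambda>n. g a (w - (w-a)/(real n + 1))) \<longlonglongrightarrow> g a w"
    and loc: "\<And>y. a \<le> y \<Longrightarrow> y < b \<Longrightarrow> \<exists>\<delta>>0. \<forall>h. 0 < h \<and> h < \<delta> \<longrightarrow> f y (y+h) \<le> g y (y+h)"
  shows "f a b \<le> g a b"
proof (rule ccontr)
  define \<phi> where "\<phi> w = g a w - f a w" for w
  have fa: "f a a = 0" using addf[of a a a] by simp
  have ga: "g a a = 0" using addg[of a a a] by simp
  have \<phi>a: "\<phi> a = 0" using fa ga by (simp add: \<phi>_def)
  assume "\<not> f a b \<le> g a b"
  then have \<phi>b: "\<phi> b < 0" by (simp add: \<phi>_def)
  define T where "T = {w. a \<le> w \<and> w \<le> b \<and> \<phi> w < 0}"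
  define w0 where "w0 = Inf T"
  have bT: "b \<in> T" using ab \<phi>b by (simp add: T_def)
  have bdd: "bdd_below T" unfolding T_def by (rule bdd_belowI[of _ a]) auto
  have aw0: "a \<le> w0" unfolding w0_def using bT by (intro cInf_greatest) (auto simp: T_def)
  have w0b: "w0 \<le> b" unfolding w0_def using bT bdd by (intro cInf_lower) auto
  have below: "\<phi> w \<ge> 0" if "a \<le> w" "w < w0" for w
  proof (rule ccontr)
    assume "\<not> \<phi> w \<ge> 0"
    then have "w \<in> T" using that w0b by (auto simp: T_def)
    then have "w0 \<le> w" unfolding w0_def using bdd by (intro cInf_lower)
    then show False using that by simp
  qed
  have \<phi>w0: "\<phi> w0 \<ge> 0"
  proof (cases "w0 = a")
    case True then show ?thesis using \<phi>a by simp
  next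
    case False
    then have aw: "a < w0" using aw0 by simp
    have lim: "(\<lambda>n. \<phi> (w0 - (w0-a)/(real n + 1))) \<longlonglongrightarrow> \<phi> w0"
      unfolding \<phi>_def by (intro tendsto_diff lcf lcg aw w0b)
    show ?thesis
    proof (rule LIMSEQ_le_const[OF lim], intro exI allI impI)
      fix n :: nat
      have p: "(w0-a)/(real n + 1) > 0" using aw by simp
      have q: "(w0-a)/(real n + 1) \<le> w0 - a" using aw by (simp add: divide_le_eq)
      show "0 \<le> \<phi> (w0 - (w0-a)/(real n + 1))" using p q by (intro below) auto
    qed
  qed
  have w0b': "w0 < b" using w0b \<phi>w0 \<phi>b by (cases "w0 = b") auto
  obtain \<delta> where d: "\<delta> > 0" "\<forall>h. 0 < h \<and> h < \<delta> \<longrightarrow> f w0 (w0+h) \<le> g w0 (w0+h)"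
    using loc[OF aw0 w0b'] by blast
  have "w0 + \<delta> \<le> z" if "z \<in> T" for z
  proof (rule ccontr)
    assume nz: "\<not> w0 + \<delta> \<le> z"
    have zT: "a \<le> z" "z \<le> b" "\<phi> z < 0" using that by (auto simp: T_def)
    have "w0 \<le> z" unfolding w0_def using that bdd by (intro cInf_lower)
    show False
    proof (cases "z = w0")
      case True then show False using \<phi>w0 zT by simp
    next
      case False
      then have h: "0 < z - w0" "z - w0 < \<delta>" using \<open>w0 \<le> z\<close> nz by auto
      have "f w0 z \<le> g w0 z" using d(2)[rule_format, of "z - w0"] h by simp
      moreover have "f a z = f a w0 + f w0 z" using addf[of a w0 z] \<open>w0 \<le> z\<close> aw0 by simp
      moreover have "g a z = g a w0 + g w0 z" using addg[of a w0 z] \<open>w0 \<le> z\<close> aw0 by simp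
      ultimately show False using \<phi>w0 zT(3) by (simp add: \<phi>_def)
    qed
  qed
  then have "w0 + \<delta> \<le> w0" unfolding w0_def using bT by (intro cInf_greatest) auto
  then show False using d(1) by simp
qed


lemma Union_left_approx:
  fixes a w :: real assumes "a < w"
  shows "(\<Union>n. {a..<w - (w-a)/(real n + 1)}) = {a..<w}"
proof (intro antisym subsetI)
  fix y assume "y \<in> (\<Union>n. {a..<w - (w-a)/(real n + 1)})"
  then obtain n where "a \<le> y" "y < w - (w-a)/(real n + 1)" by auto
  moreover have "(w-a)/(real n + 1) > 0" using assms by simp
  ultimately show "y \<in> {a..<w}" by auto
next
  fix y assume y: "y \<in> {a..<w}"
  then have "w - y > 0" by simp
  obtain n :: nat where n: "(w - a) / (w - y) < real n + 1"
    using reals_Archimedean2[of "(w - a) / (w - y)"] by (metis add.commute add_strict_increasing zero_less_one less_eq_real_def)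
  have "(w-a) < (real n + 1) * (w - y)" using n \<open>w - y > 0\<close> by (simp add: divide_less_eq mult.commute)
  then have "(w-a)/(real n + 1) < w - y" by (simp add: divide_less_eq mult.commute)
  then have "y \<in> {a..<w - (w-a)/(real n + 1)}" using y by auto
  then show "y \<in> (\<Union>n. {a..<w - (w-a)/(real n + 1)})" by blast
qed

lemma incseq_left_approx:
  fixes a w :: real assumes "a < w"
  shows "incseq (\<lambda>n. {a..<w - (w-a)/(real n + 1)})"
proof (rule incseq_SucI, rule subsetI)
  fix n x assume "x \<in> {a..<w - (w-a)/(real n + 1)}"
  moreover have "(w-a)/(real (Suc n) + 1) \<le> (w-a)/(real n + 1)"
    using assms by (intro divide_left_mono) auto
  ultimately show "x \<in> {a..<w - (w-a)/(real (Suc n) + 1)}" by auto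
qed

locale cdsetup = prob_space M for M :: "'a measure" +
  fixes \<xi> \<eta> :: "'a \<Rightarrow> real" and s0 :: "real \<Rightarrow> real"
  assumes mxi[measurable]: "\<xi> \<in> borel_measurable M" and meta[measurable]: "\<eta> \<in> borel_measurable M"
    and etapos: "AE \<omega> in M. \<eta> \<omega> > 0"
    and s0cont: "continuous_on {0<..} s0" and s0pos: "\<And>y. y>0 \<Longrightarrow> s0 y > 0"
    and cd: "cond_dependent M \<xi> \<eta> s0"
    and s0int: "integrable M (\<lambda>\<omega>. s0 (\<eta> \<omega>))"
begin

definition U where "U t = measure M {\<omega>\<in>space M. \<xi> \<omega> > t}"
definition nu where "nu t B = measure M {\<omega>\<in>space M. \<xi> \<omega> > t \<and> \<eta> \<omega> \<in> B}"
definition mu where "mu B = measure M {\<omega>\<in>space M. \<eta> \<omega> \<in> B}"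
definition Ih where "Ih (h::real\<Rightarrow>real) B = (\<integral>\<omega>. indicator B (\<eta> \<omega>) * h (\<eta> \<omega>) \<partial>M)"

lemma int_ind:
  fixes h :: "real \<Rightarrow> real"
  assumes "integrable M (\<lambda>\<omega>. h (\<eta> \<omega>))" "B \<in> sets borel"
  shows "integrable M (\<lambda>\<omega>. indicator B (\<eta> \<omega>) * h (\<eta> \<omega>))"
proof -
  have s: "\<eta> -` B \<inter> space M \<in> sets M" using assms(2) by (rule measurable_sets[OF meta])
  have i: "integrable M (\<lambda>\<omega>. h (\<eta> \<omega>) * indicator (\<eta> -` B \<inter> space M) \<omega>)"
    by (rule integrable_real_mult_indicator[OF s assms(1)])
  have eq: "\<And>\<omega>. \<omega> \<in> space M \<Longrightarrow> indicator B (\<eta> \<omega>) * h (\<eta> \<omega>) = h (\<eta> \<omega>) * indicator (\<eta> -` B \<inter> space M) \<omega>"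
    by (auto simp: indicator_def)
  have "integrable M (\<lambda>\<omega>. indicator B (\<eta> \<omega>) * h (\<eta> \<omega>)) = integrable M (\<lambda>\<omega>. h (\<eta> \<omega>) * indicator (\<eta> -` B \<inter> space M) \<omega>)"
    using eq by (intro Bochner_Integration.integrable_cong) auto
  with i show ?thesis by simp
qed

lemma int_ind_eta: "B \<in> sets borel \<Longrightarrow> (\<integral>\<omega>. indicator B (\<eta> \<omega>) \<partial>M) = mu B"
proof -
  assume B: "B \<in> sets borel"
  have "(\<integral>\<omega>. indicator B (\<eta> \<omega>) \<partial>M) = (\<integral>\<omega>. indicator (\<eta> -` B \<inter> space M) \<omega> \<partial>M)"
    by (rule Bochner_Integration.integral_cong) (auto simp: indicator_def)
  also have "\<dots> = measure M ((\<eta> -` B \<inter> space M) \<inter> space M)" by (rule Bochner_Integration.integral_indicator)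
  also have "(\<eta> -` B \<inter> space M) \<inter> space M = {\<omega>\<in>space M. \<eta> \<omega> \<in> B}" by auto
  finally show ?thesis by (simp add: mu_def)
qed

lemma Ih_add:
  assumes "integrable M (\<lambda>\<omega>. h (\<eta> \<omega>))" "a \<le> b" "b \<le> c"
  shows "Ih h {a..<c} = Ih h {a..<b} + Ih h {b..<c}"
proof -
  have "Ih h {a..<c} = (\<integral>\<omega>. indicator {a..<b} (\<eta> \<omega>) * h (\<eta> \<omega>) + indicator {b..<c} (\<eta> \<omega>) * h (\<eta> \<omega>) \<partial>M)"
    unfolding Ih_def using assms(2,3)
    by (intro Bochner_Integration.integral_cong) (auto simp: indicator_def)
  also have "\<dots> = Ih h {a..<b} + Ih h {b..<c}"
    unfolding Ih_def by (intro Bochner_Integration.integral_add int_ind assms) auto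
  finally show ?thesis .
qed

lemma Ih_incseq:
  assumes "integrable M (\<lambda>\<omega>. h (\<eta> \<omega>))" "incseq B" "\<And>n. B n \<in> sets borel"
  shows "(\<lambda>n. Ih h (B n)) \<longlonglongrightarrow> Ih h (\<Union>n. B n)"
  unfolding Ih_def
proof (rule integral_dominated_convergence[where w="\<lambda>\<omega>. \<bar>h (\<eta> \<omega>)\<bar>"])
  have "(\<Union>n. B n) \<in> sets borel" using assms(3) by auto
  then show "(\<lambda>\<omega>. indicator (\<Union>n. B n) (\<eta> \<omega>) * h (\<eta> \<omega>)) \<in> borel_measurable M"
    using int_ind[OF assms(1)] by auto
  show "(\<lambda>\<omega>. indicator (B n) (\<eta> \<omega>) * h (\<eta> \<omega>)) \<in> borel_measurable M" for n
    using int_ind[OF assms(1) assms(3)] by auto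
  show "integrable M (\<lambda>\<omega>. \<bar>h (\<eta> \<omega>)\<bar>)" using assms(1) by auto
  show "AE \<omega> in M. (\<lambda>n. indicator (B n) (\<eta> \<omega>) * h (\<eta> \<omega>)) \<longlonglongrightarrow> indicator (\<Union>n. B n) (\<eta> \<omega>) * h (\<eta> \<omega>)"
    by (intro AE_I2 tendsto_mult tendsto_const LIMSEQ_indicator_incseq assms(2))
  show "AE \<omega> in M. norm (indicator (B n) (\<eta> \<omega>) * h (\<eta> \<omega>)) \<le> \<bar>h (\<eta> \<omega>)\<bar>" for n
    by (intro AE_I2) (auto simp: indicator_def)
qed

lemma mu_sets: "B \<in> sets borel \<Longrightarrow> {\<omega>\<in>space M. \<eta> \<omega> \<in> B} \<in> sets M"
proof -
  assume "B \<in> sets borel"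
  then have "\<eta> -` B \<inter> space M \<in> sets M" by (rule measurable_sets[OF meta])
  moreover have "\<eta> -` B \<inter> space M = {\<omega>\<in>space M. \<eta> \<omega> \<in> B}" by auto
  ultimately show ?thesis by simp
qed

lemma nu_sets: "B \<in> sets borel \<Longrightarrow> {\<omega>\<in>space M. \<xi> \<omega> > t \<and> \<eta> \<omega> \<in> B} \<in> sets M"
proof -
  assume "B \<in> sets borel"
  moreover have "{\<omega>\<in>space M. \<xi> \<omega> > t} \<in> sets M" by measurable
  ultimately have "{\<omega>\<in>space M. \<eta> \<omega> \<in> B} \<inter> {\<omega>\<in>space M. \<xi> \<omega> > t} \<in> sets M" by (intro sets.Int mu_sets)
  moreover have "{\<omega>\<in>space M. \<eta> \<omega> \<in> B} \<inter> {\<omega>\<in>space M. \<xi> \<omega> > t} = {\<omega>\<in>space M. \<xi> \<omega> > t \<and> \<eta> \<omega> \<in> B}" by auto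
  ultimately show ?thesis by simp
qed

lemma nu_add:
  assumes "a \<le> b" "b \<le> c"
  shows "nu t {a..<c} = nu t {a..<b} + nu t {b..<c}"
proof -
  have "{\<omega>\<in>space M. \<xi> \<omega> > t \<and> \<eta> \<omega> \<in> {a..<c}} =
        {\<omega>\<in>space M. \<xi> \<omega> > t \<and> \<eta> \<omega> \<in> {a..<b}} \<union> {\<omega>\<in>space M. \<xi> \<omega> > t \<and> \<eta> \<omega> \<in> {b..<c}}"
    using assms by auto
  then show ?thesis unfolding nu_def
    by (simp add: finite_measure_Union[symmetric] Collect_conj_eq[symmetric] disjoint_iff)
qed

lemma nu_incseq:
  assumes "incseq B" "\<And>n. B n \<in> sets borel"
  shows "(\<lambda>n. nu t (B n)) \<longlonglongrightarrow> nu t (\<Union>n. B n)"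
proof -
  have "(\<lambda>n. measure M {\<omega>\<in>space M. \<xi> \<omega> > t \<and> \<eta> \<omega> \<in> B n}) \<longlonglongrightarrow> measure M (\<Union>n. {\<omega>\<in>space M. \<xi> \<omega> > t \<and> \<eta> \<omega> \<in> B n})"
    using assms by (intro finite_Lim_measure_incseq) (auto simp: incseq_def nu_sets)
  moreover have "(\<Union>n. {\<omega>\<in>space M. \<xi> \<omega> > t \<and> \<eta> \<omega> \<in> B n}) = {\<omega>\<in>space M. \<xi> \<omega> > t \<and> \<eta> \<omega> \<in> (\<Union>n. B n)}"
    by auto
  ultimately show ?thesis by (simp add: nu_def)
qed

lemma Ih_null:
  assumes "B \<in> sets borel" "mu B = 0"
  shows "Ih h B = 0"
proof -
  have "{\<omega>\<in>space M. \<eta> \<omega> \<in> B} \<in> null_sets M"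
    using assms by (auto simp: null_sets_def emeasure_eq_measure mu_def)
  then have "AE \<omega> in M. \<omega> \<notin> {\<omega>\<in>space M. \<eta> \<omega> \<in> B}" by (rule AE_not_in)
  from this AE_space have "AE \<omega> in M. indicator B (\<eta> \<omega>) * h (\<eta> \<omega>) = 0"
    by eventually_elim (auto simp: indicator_def)
  then show ?thesis unfolding Ih_def by (rule integral_eq_zero_AE)
qed

end

context cdsetup begin

lemma s0_near:
  assumes "y > 0" "r > 0"
  shows "\<exists>d>0. \<forall>z. \<bar>z - y\<bar> < d \<longrightarrow> \<bar>s0 z - s0 y\<bar> < r * s0 y"
proof -
  have "isCont s0 y" using s0cont assms(1) by (simp add: continuous_on_eq_continuous_at)
  then have "s0 \<midarrow>y\<rightarrow> s0 y" by (rule isContD)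
  moreover have "r * s0 y > 0" using assms s0pos by simp
  ultimately have "eventually (\<lambda>z. dist (s0 z) (s0 y) < r * s0 y) (at y)"
    by (rule tendstoD)
  then obtain d where d: "d > 0" "\<forall>z. z \<noteq> y \<and> dist z y < d \<longrightarrow> dist (s0 z) (s0 y) < r * s0 y"
    unfolding eventually_at by auto
  show ?thesis
  proof (intro exI[of _ d] conjI allI impI)
    fix z assume "\<bar>z - y\<bar> < d"
    then show "\<bar>s0 z - s0 y\<bar> < r * s0 y"
      using d \<open>r * s0 y > 0\<close> by (cases "z = y") (auto simp: dist_real_def)
  qed (use d in auto)
qed

lemma S_compare:
  assumes B: "B \<in> sets borel" and bnd: "\<And>z. z \<in> B \<Longrightarrow> lo \<le> s0 z \<and> s0 z \<le> hi"
  shows "lo * mu B \<le> Ih s0 B" "Ih s0 B \<le> hi * mu B"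
proof -
  have i1: "integrable M (\<lambda>\<omega>. indicator B (\<eta> \<omega>) * s0 (\<eta> \<omega>))" by (rule int_ind[OF s0int B])
  have i2: "integrable M (\<lambda>\<omega>. indicator B (\<eta> \<omega>) * c)" for c :: real
    using int_ind[of "\<lambda>_. c", OF _ B] by simp
  have "(\<integral>\<omega>. indicator B (\<eta> \<omega>) * lo \<partial>M) \<le> Ih s0 B"
    unfolding Ih_def using bnd by (intro integral_mono i1 i2) (auto simp: indicator_def)
  moreover have ic: "(\<integral>\<omega>. indicator B (\<eta> \<omega>) * c \<partial>M) = c * mu B" for c
    using int_ind_eta[OF B] by simp
  ultimately show "lo * mu B \<le> Ih s0 B" using ic[of lo] by linarith
  have "Ih s0 B \<le> (\<integral>\<omega>. indicator B (\<eta> \<omega>) * hi \<partial>M)"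
    unfolding Ih_def using bnd by (intro integral_mono i1 i2) (auto simp: indicator_def)
  then show "Ih s0 B \<le> hi * mu B" using ic[of hi] by linarith
qed

lemma nu_le_mu: "B \<in> sets borel \<Longrightarrow> nu t B \<le> mu B"
  unfolding nu_def mu_def by (intro finite_measure_mono mu_sets) auto

lemma local_bound:
  assumes e: "0 < e" "e < 1" and y: "y > 0"
    and hc: "y \<in> supp_pts M \<eta> \<Longrightarrow> has_cond_tail M \<xi> \<eta> t y c"
    and cb: "y \<in> supp_pts M \<eta> \<Longrightarrow> \<bar>c / (U t * s0 y) - 1\<bar> \<le> e/2"
    and Ut: "U t > 0"
  shows "\<exists>\<delta>>0. \<forall>h. 0 < h \<and> h < \<delta> \<longrightarrow> nu t {y..<y+h} \<le> (1+e) * U t * Ih s0 {y..<y+h}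
            \<and> (1-e) * U t * Ih s0 {y..<y+h} \<le> nu t {y..<y+h}"
proof (cases "y \<in> supp_pts M \<eta>")
  case False
  then obtain \<delta> where d: "\<delta> > 0" "\<not> mu {y-\<delta><..<y+\<delta>} > 0"
    using y unfolding supp_pts_def mu_def by auto
  then have m0: "mu {y-\<delta><..<y+\<delta>} = 0" using measure_nonneg[of M "{\<omega> \<in> space M. \<eta> \<omega> \<in> {y-\<delta><..<y+\<delta>}}"] unfolding mu_def by linarith
  show ?thesis
  proof (intro exI[of _ \<delta>] conjI allI impI d(1))
    fix h assume h: "0 < h \<and> h < \<delta>"
    have "mu {y..<y+h} \<le> mu {y-\<delta><..<y+\<delta>}"
      unfolding mu_def using h d(1) by (intro finite_measure_mono mu_sets) auto
    then have mh: "mu {y..<y+h} = 0" using m0 by (simp add: mu_def measure_le_0_iff)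
    then have "nu t {y..<y+h} = 0" using nu_le_mu[of "{y..<y+h}" t] by (simp add: nu_def measure_le_0_iff)
    moreover have "Ih s0 {y..<y+h} = 0" by (rule Ih_null) (use mh in auto)
    ultimately show "nu t {y..<y+h} \<le> (1+e) * U t * Ih s0 {y..<y+h}"
      "(1-e) * U t * Ih s0 {y..<y+h} \<le> nu t {y..<y+h}" by simp_all
  qed
next
  case True
  define v where "v = U t * s0 y"
  have v: "v > 0" using Ut s0pos[OF y] by (simp add: v_def)
  have cv: "\<bar>c / v - 1\<bar> \<le> e/2" using cb[OF True] by (simp add: v_def)
  have cup: "c < (1 + 3*e/4) * v"
  proof -
    have "c / v \<le> 1 + e/2" using cv by linarith
    then have "c \<le> (1 + e/2) * v" using v by (simp add: divide_le_eq)
    also have "\<dots> < (1 + 3*e/4) * v" using v e by (intro mult_strict_right_mono) auto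
    finally show ?thesis .
  qed
  have clo: "c > (1 - 3*e/4) * v"
  proof -
    have "c / v \<ge> 1 - e/2" using cv by linarith
    then have "c \<ge> (1 - e/2) * v" using v by (simp add: le_divide_eq)
    moreover have "(1 - 3*e/4) * v < (1 - e/2) * v" using v e by (intro mult_strict_right_mono) auto
    ultimately show ?thesis by linarith
  qed
  have hc': "(\<forall>\<^sub>F h in at_right 0. mu {y..<y+h} > 0) \<and>
     ((\<lambda>h. nu t {y..<y+h} / mu {y..<y+h}) \<longlongrightarrow> c) (at_right 0)"
    using hc[OF True] unfolding has_cond_tail_def mu_def nu_def by simp
  have ev: "\<forall>\<^sub>F h in at_right 0. mu {y..<y+h} > 0 \<and> nu t {y..<y+h} / mu {y..<y+h} < (1 + 3*e/4) * v
       \<and> nu t {y..<y+h} / mu {y..<y+h} > (1 - 3*e/4) * v"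
    using hc' order_tendstoD(1)[OF conjunct2[OF hc'] clo] order_tendstoD(2)[OF conjunct2[OF hc'] cup]
    by (auto elim: eventually_conj)
  then obtain b where b: "b > 0" "\<forall>h>0. h < b \<longrightarrow> mu {y..<y+h} > 0 \<and> nu t {y..<y+h} / mu {y..<y+h} < (1 + 3*e/4) * v
       \<and> nu t {y..<y+h} / mu {y..<y+h} > (1 - 3*e/4) * v"
    unfolding eventually_at_right_field by auto
  define r where "r = e/8"
  have r: "r > 0" using e by (simp add: r_def)
  obtain d where d: "d > 0" "\<forall>z. \<bar>z - y\<bar> < d \<longrightarrow> \<bar>s0 z - s0 y\<bar> < r * s0 y"
    using s0_near[OF y r] by auto
  have ee: "e * e \<le> e" using e by (simp add: mult_le_cancel_left1)
  have k1e: "(1+e) * (1-r) = 1 + 7*e/8 - (e*e)/8" by (simp add: r_def field_simps)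
  have k1: "1 + 3*e/4 \<le> (1+e) * (1-r)" unfolding k1e using ee by linarith
  have k2e: "(1-e) * (1+r) = 1 - 7*e/8 - (e*e)/8" by (simp add: r_def field_simps)
  have "e * e \<ge> 0" by simp
  then have k2: "(1-e) * (1+r) \<le> 1 - 3*e/4" unfolding k2e using e by linarith
  show ?thesis
  proof (intro exI[of _ "min b d"] conjI allI impI)
    show "min b d > 0" using b d by simp
    fix h assume h: "0 < h \<and> h < min b d"
    define B where "B = {y..<y+h}"
    define m where "m = mu B"
    have Bb: "B \<in> sets borel" by (simp add: B_def)
    from b(2) h have m: "m > 0" and rup: "nu t B / m < (1 + 3*e/4) * v" and rlo: "nu t B / m > (1 - 3*e/4) * v"
      by (auto simp: m_def B_def)
    have bnd: "(1-r) * s0 y \<le> s0 z \<and> s0 z \<le> (1+r) * s0 y" if "z \<in> B" for z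
      using d(2)[rule_format, of z] that h by (auto simp: B_def algebra_simps abs_less_iff)
    have S1: "(1-r) * s0 y * m \<le> Ih s0 B" and S2: "Ih s0 B \<le> (1+r) * s0 y * m"
      using S_compare[OF Bb bnd] by (auto simp: m_def)
    have nu_eq: "nu t B = (nu t B / m) * m" using m by simp
    have U0: "U t \<ge> 0" using Ut by simp
    have "nu t B \<le> ((1 + 3*e/4) * v) * m" using rup m nu_eq by (metis less_eq_real_def mult_right_mono)
    also have "\<dots> \<le> ((1+e) * (1-r)) * v * m" using k1 v m by (intro mult_right_mono) auto
    also have "\<dots> = (1+e) * U t * ((1-r) * s0 y * m)" by (simp add: v_def algebra_simps)
    also have "\<dots> \<le> (1+e) * U t * Ih s0 B" using S1 U0 e by (intro mult_left_mono) auto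
    finally show "nu t {y..<y+h} \<le> (1+e) * U t * Ih s0 {y..<y+h}" by (simp add: B_def)
    have "(1-e) * U t * Ih s0 B \<le> (1-e) * U t * ((1+r) * s0 y * m)" using S2 U0 e by (intro mult_left_mono) auto
    also have "\<dots> = ((1-e) * (1+r)) * v * m" by (simp add: v_def algebra_simps)
    also have "\<dots> \<le> ((1 - 3*e/4) * v) * m" using k2 v m by (intro mult_right_mono) auto
    also have "\<dots> \<le> nu t B" using rlo m nu_eq by (metis less_eq_real_def mult_right_mono)
    finally show "(1-e) * U t * Ih s0 {y..<y+h} \<le> nu t {y..<y+h}" by (simp add: B_def)
  qed
qed

end

context cdsetup begin

lemma Upos: "U t > 0"
  using cd unfolding cond_dependent_def rv_tail_def U_def by auto

lemma U_antimono: "t \<le> t' \<Longrightarrow> U t' \<le> U t"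
  unfolding U_def by (intro finite_measure_mono) auto

lemma lc_nu: "a < w \<Longrightarrow> (\<lambda>n. nu t {a..<w - (w-a)/(real n + 1)}) \<longlonglongrightarrow> nu t {a..<w}"
  using nu_incseq[OF incseq_left_approx, of a w t] Union_left_approx[of a w] by auto

lemma lc_Ih: "integrable M (\<lambda>\<omega>. h (\<eta> \<omega>)) \<Longrightarrow> a < w \<Longrightarrow> (\<lambda>n. Ih h {a..<w - (w-a)/(real n + 1)}) \<longlonglongrightarrow> Ih h {a..<w}"
  using Ih_incseq[OF _ incseq_left_approx, of h a w] Union_left_approx[of a w] by auto

lemma step1:
  assumes e: "0 < e" "e < 1"
  shows "\<exists>t0. \<forall>t\<ge>t0. \<forall>a b. 0 < a \<longrightarrow> a \<le> b \<longrightarrow> nu t {a..<b} \<le> (1+e) * U t * Ih s0 {a..<b}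
             \<and> (1-e) * U t * Ih s0 {a..<b} \<le> nu t {a..<b}"
proof -
  obtain c where c1: "\<forall>x. \<forall>y\<in>supp_pts M \<eta>. has_cond_tail M \<xi> \<eta> x y (c x y)"
    and c2: "\<forall>e>0. \<forall>\<^sub>F x in at_top. \<forall>y\<in>supp_pts M \<eta>. \<bar>c x y / (rv_tail M \<xi> x * s0 y) - 1\<bar> \<le> e"
    using cd unfolding cond_dependent_def by blast
  have "\<forall>\<^sub>F x in at_top. \<forall>y\<in>supp_pts M \<eta>. \<bar>c x y / (U x * s0 y) - 1\<bar> \<le> e/2"
    using c2[rule_format, of "e/2"] e by (simp add: rv_tail_def U_def)
  then obtain t0 where t0: "\<And>t. t \<ge> t0 \<Longrightarrow> \<forall>y\<in>supp_pts M \<eta>. \<bar>c t y / (U t * s0 y) - 1\<bar> \<le> e/2"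
    unfolding eventually_at_top_linorder by auto
  show ?thesis
  proof (intro exI[of _ t0] allI impI conjI)
    fix t a b :: real assume t: "t \<ge> t0" and a: "0 < a" and ab: "a \<le> b"
    have loc: "\<exists>\<delta>>0. \<forall>h. 0 < h \<and> h < \<delta> \<longrightarrow> nu t {y..<y+h} \<le> (1+e) * U t * Ih s0 {y..<y+h}
            \<and> (1-e) * U t * Ih s0 {y..<y+h} \<le> nu t {y..<y+h}" if "a \<le> y" for y
      using a that by (intro local_bound e Upos) (use c1 t0[OF t] in auto)
    have addg: "k * Ih s0 {u..<w} = k * Ih s0 {u..<v} + k * Ih s0 {v..<w}" if "u \<le> v" "v \<le> w" for k u v w
      using Ih_add[OF s0int that] by (simp add: algebra_simps)
    show "nu t {a..<b} \<le> (1+e) * U t * Ih s0 {a..<b}"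
      apply (rule creep[where f="\<lambda>u w. nu t {u..<w}" and g="\<lambda>u w. ((1+e) * U t) * Ih s0 {u..<w}", OF ab])
      subgoal by (rule nu_add)
      subgoal by (rule addg)
      subgoal by (rule lc_nu)
      subgoal by (intro tendsto_mult_left lc_Ih s0int)
      subgoal for y using loc[of y] by blast
      done
    show "(1-e) * U t * Ih s0 {a..<b} \<le> nu t {a..<b}"
      apply (rule creep[where g="\<lambda>u w. nu t {u..<w}" and f="\<lambda>u w. ((1-e) * U t) * Ih s0 {u..<w}", OF ab])
      subgoal by (rule addg)
      subgoal by (rule nu_add)
      subgoal by (intro tendsto_mult_left lc_Ih s0int)
      subgoal by (rule lc_nu)
      subgoal for y using loc[of y] by blast
      done
  qed
qed

end


lemma tendsto_from_bounds:
  fixes f :: "'b \<Rightarrow> real"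
  assumes "\<And>e. e > 0 \<Longrightarrow> eventually (\<lambda>x. c - e \<le> f x \<and> f x \<le> c + e) F"
  shows "(f \<longlongrightarrow> c) F"
proof (rule tendstoI)
  fix e :: real assume "e > 0"
  then have "e/2 > 0" by simp
  from assms[OF this] show "eventually (\<lambda>x. dist (f x) c < e) F"
    by eventually_elim (use \<open>e > 0\<close> in \<open>auto simp: dist_real_def abs_if\<close>)
qed

definition cellseq :: "nat \<Rightarrow> real set" where "cellseq n = {1/(real n + 1)..<real n + 1}"

lemma cellseq_incseq: "incseq cellseq"
proof (rule incseq_SucI)
  fix n
  have "1/(real (Suc n) + 1) \<le> 1/(real n + 1)" by (intro divide_left_mono) auto
  then show "cellseq n \<subseteq> cellseq (Suc n)" by (auto simp: cellseq_def)
qed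

lemma cellseq_Union: "(\<Union>n. cellseq n) = {0<..}"
proof (intro antisym subsetI)
  fix y assume "y \<in> (\<Union>n. cellseq n)"
  then obtain n where "1/(real n + 1) \<le> y" by (auto simp: cellseq_def)
  moreover have "1/(real n + 1) > 0" by simp
  ultimately have "0 < y" by linarith
  then show "y \<in> {0<..}" by simp
next
  fix y :: real assume "y \<in> {0<..}"
  then have y: "y > 0" by simp
  obtain n :: nat where n: "max y (1/y) < real n" using reals_Archimedean2 by blast
  have "1/(real n + 1) \<le> y"
  proof -
    have "1/y < real n + 1" using n by simp
    then have "1 < (real n + 1) * y" using y by (simp add: divide_less_eq)
    then show ?thesis by (simp add: divide_le_eq mult.commute)
  qed
  moreover have "y < real n + 1" using n by simp
  ultimately show "y \<in> (\<Union>n. cellseq n)" by (auto simp: cellseq_def)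
qed

lemma cellseq_mono: "A \<le> 1/(real n + 1) \<Longrightarrow> real n + 1 \<le> B \<Longrightarrow> cellseq n \<subseteq> {A..<B}"
  by (auto simp: cellseq_def)

context cdsetup begin

lemma Ih_pos_eq: 
  assumes hi: "integrable M (\<lambda>\<omega>. h (\<eta> \<omega>))" shows "Ih h {0<..} = (\<integral>\<omega>. h (\<eta> \<omega>) \<partial>M)"
  unfolding Ih_def
proof (rule integral_cong_AE)
  show "(\<lambda>\<omega>. indicator {0<..} (\<eta> \<omega>) * h (\<eta> \<omega>)) \<in> borel_measurable M"
    using int_ind[OF hi, of "{0<..}"] by auto
  show "(\<lambda>\<omega>. h (\<eta> \<omega>)) \<in> borel_measurable M" using hi by auto
  show "AE \<omega> in M. indicator {0<..} (\<eta> \<omega>) * h (\<eta> \<omega>) = h (\<eta> \<omega>)"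
    using etapos by eventually_elim auto
qed

lemma Ih_exhaust: "integrable M (\<lambda>\<omega>. h (\<eta> \<omega>)) \<Longrightarrow> (\<lambda>n. Ih h (cellseq n)) \<longlonglongrightarrow> (\<integral>\<omega>. h (\<eta> \<omega>) \<partial>M)"
  using Ih_incseq[of h cellseq] cellseq_incseq cellseq_Union Ih_pos_eq by (auto simp: cellseq_def)

lemma nu_exhaust: "(\<lambda>n. nu t (cellseq n)) \<longlonglongrightarrow> U t"
proof -
  have "(\<lambda>n. nu t (cellseq n)) \<longlonglongrightarrow> nu t {0<..}"
    using nu_incseq[of cellseq t] cellseq_incseq cellseq_Union by (auto simp: cellseq_def)
  moreover have "nu t {0<..} = U t" unfolding nu_def U_def
  proof (rule finite_measure_eq_AE)
    show "AE \<omega> in M. (\<omega> \<in> {\<omega> \<in> space M. t < \<xi> \<omega> \<and> \<eta> \<omega> \<in> {0<..}}) = (\<omega> \<in> {\<omega> \<in> space M. t < \<xi> \<omega>})"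
      using etapos by eventually_elim auto
    show "{\<omega> \<in> space M. t < \<xi> \<omega> \<and> \<eta> \<omega> \<in> {0<..}} \<in> sets M" by (rule nu_sets) auto
    show "{\<omega> \<in> space M. t < \<xi> \<omega>} \<in> sets M" by measurable
  qed
  ultimately show ?thesis by simp
qed

lemma Z1: "(\<integral>\<omega>. s0 (\<eta> \<omega>) \<partial>M) = 1"
proof -
  define Z where "Z = (\<integral>\<omega>. s0 (\<eta> \<omega>) \<partial>M)"
  have SZ: "(\<lambda>n. Ih s0 (cellseq n)) \<longlonglongrightarrow> Z" unfolding Z_def by (rule Ih_exhaust[OF s0int])
  have bnds: "Z * (1-e) \<le> 1 \<and> 1 \<le> (1+e) * Z" if e: "0 < e" "e < 1" for e
  proof -
    obtain t0 where t0: "\<forall>t\<ge>t0. \<forall>a b. 0 < a \<longrightarrow> a \<le> b \<longrightarrow> nu t {a..<b} \<le> (1+e) * U t * Ih s0 {a..<b}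
             \<and> (1-e) * U t * Ih s0 {a..<b} \<le> nu t {a..<b}" using step1[OF e] by blast
    have one: "1 \<le> (real n + 1) * (real n + 1)" for n using mult_mono[of 1 "real n+1" 1 "real n+1"] by simp
    have b: "nu t0 (cellseq n) \<le> (1+e) * U t0 * Ih s0 (cellseq n) \<and> (1-e) * U t0 * Ih s0 (cellseq n) \<le> nu t0 (cellseq n)" for n
      using t0[rule_format, of t0 "1/(real n + 1)" "real n + 1"] unfolding cellseq_def
      using one[of n] by (simp add: divide_le_eq)
    have l1: "(\<lambda>n. (1+e) * U t0 * Ih s0 (cellseq n)) \<longlonglongrightarrow> (1+e) * U t0 * Z" by (intro tendsto_intros SZ)
    have l2: "(\<lambda>n. (1-e) * U t0 * Ih s0 (cellseq n)) \<longlonglongrightarrow> (1-e) * U t0 * Z" by (intro tendsto_intros SZ)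
    have f1: "U t0 \<le> (1+e) * U t0 * Z" using b by (intro LIMSEQ_le[OF nu_exhaust l1]) auto
    have f2: "(1-e) * U t0 * Z \<le> U t0" using b by (intro LIMSEQ_le[OF l2 nu_exhaust]) auto
    have u: "U t0 > 0" by (rule Upos)
    have A: "U t0 * 1 \<le> U t0 * ((1+e)*Z)" using f1 by (simp add: algebra_simps)
    have B: "U t0 * (Z*(1-e)) \<le> U t0 * 1" using f2 by (simp add: algebra_simps)
    show ?thesis using A B u by (simp only: mult_le_cancel_left_pos)
  qed
  have "Z \<le> 1"
  proof (rule ccontr)
    assume "\<not> Z \<le> 1"
    then have Z: "Z > 1" by simp
    define e where "e = (Z - 1) / (2 * Z)"
    have e: "0 < e" "e < 1" using Z by (auto simp: e_def field_simps)
    have "Z * (1 - e) = (Z + 1) / 2" using Z by (simp add: e_def field_simps)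
    then show False using bnds[OF e] Z by simp
  qed
  moreover have "Z \<ge> 1"
  proof (rule ccontr)
    assume "\<not> Z \<ge> 1"
    then have Z: "Z < 1" by simp
    define e where "e = (1 - Z) / 2"
    have e: "0 < e" "e < 1" using Z bnds[of "1/2"] by (auto simp: e_def field_simps)
    have p: "(1 - Z) * (2 - Z) > 0" using Z by (intro mult_pos_pos) auto
    have q1: "(1+e) * Z = (3*Z - Z*Z)/2" by (simp add: e_def field_simps)
    have q2: "(1 - Z) * (2 - Z) = 2 - 3*Z + Z*Z" by (simp add: algebra_simps)
    have "(3*Z - Z*Z)/2 < 1" using p unfolding q2 by (simp add: field_simps)
    then have "(1+e) * Z < 1" unfolding q1 .
    then show False using bnds[OF e] by simp
  qed
  ultimately show ?thesis by (simp add: Z_def)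
qed

end


definition cell :: "real \<Rightarrow> real \<Rightarrow> nat \<Rightarrow> real set" where
  "cell A q k = {A * q^k ..< A * q^(Suc k)}"

lemma cells_partition:
  fixes A q :: real assumes "A > 0" "q > 1"
  shows "(\<Sum>k<N. indicator (cell A q k) y) = (indicator {A..<A*q^N} y :: real)"
proof (induction N)
  case 0 then show ?case by simp
next
  case (Suc N)
  have m1: "A \<le> A * q^N" using assms by simp
  have m2: "A * q^N \<le> A * q^(Suc N)" using assms by simp
  have "indicator {A..<A*q^(Suc N)} y = (indicator {A..<A*q^N} y + indicator (cell A q N) y :: real)"
    using m1 m2 by (auto simp: indicator_def cell_def)
  then show ?case using Suc by simp
qed

lemma cells_cover:
  fixes A q :: real assumes "A > 0" "q > 1" "y \<in> {A..<A*q^N}"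
  shows "\<exists>k<N. y \<in> cell A q k"
proof (rule ccontr)
  assume "\<not> ?thesis"
  then have "(\<Sum>k<N. indicator (cell A q k) y) = (0::real)" by (auto simp: indicator_def)
  then show False using cells_partition[OF assms(1,2), where N=N and y=y] assms(3) by simp
qed

lemma cells_disjoint:
  fixes A q :: real assumes "A > 0" "q > 1"
  shows "disjoint_family (cell A q)"
proof (unfold disjoint_family_on_def, intro ballI impI)
  fix m n :: nat assume "m \<noteq> n"
  have *: "cell A q i \<inter> cell A q j = {}" if "i < j" for i j
  proof -
    have "A * q^(Suc i) \<le> A * q^j" using assms that by (intro mult_left_mono power_increasing) auto
    then show ?thesis by (auto simp: cell_def)
  qed
  show "cell A q m \<inter> cell A q n = {}"
    using \<open>m \<noteq> n\<close> *[of m n] *[of n m] by (cases "m < n") (auto simp: Int_commute)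
qed

lemma cell_pos: "A > 0 \<Longrightarrow> q > 1 \<Longrightarrow> y \<in> cell A q k \<Longrightarrow> y > 0"
  unfolding cell_def by (auto intro: less_le_trans[of 0 "A * q^k"])

context cdsetup begin

lemma Ih_cells_sum:
  assumes h: "integrable M (\<lambda>\<omega>. h (\<eta> \<omega>))" and A: "A > 0" "q > 1"
  shows "(\<Sum>k<N. Ih h (cell A q k)) = Ih h {A..<A*q^N}"
proof -
  have "(\<Sum>k<N. Ih h (cell A q k)) = (\<integral>\<omega>. (\<Sum>k<N. indicator (cell A q k) (\<eta> \<omega>) * h (\<eta> \<omega>)) \<partial>M)"
    unfolding Ih_def by (rule Bochner_Integration.integral_sum[symmetric]) (intro int_ind h, simp add: cell_def)
  also have "\<dots> = Ih h {A..<A*q^N}"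
    unfolding Ih_def sum_distrib_right[symmetric] cells_partition[OF A] ..
  finally show ?thesis .
qed

lemma grid_upper:
  assumes bnd: "\<forall>t\<ge>t0. \<forall>a b. 0 < a \<longrightarrow> a \<le> b \<longrightarrow> nu t {a..<b} \<le> c1 * U t * Ih s0 {a..<b}"
    and A: "A > 0" "q > 1" and D: "D > 0" and x: "x > 0" "x / D \<ge> t0"
  shows "measure M {\<omega>\<in>space M. \<xi> \<omega> > x / \<eta> \<omega> \<and> \<eta> \<omega> \<in> {A..<A*q^N} \<and> \<eta> \<omega> \<le> D}
     \<le> (\<Sum>k<N. c1 * U (x / min (A*q^(Suc k)) D) * Ih s0 (cell A q k))"
proof -
  define th where "th k = x / min (A*q^(Suc k)) D" for k
  have mpos: "min (A*q^(Suc k)) D > 0" for k using A D by simp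
  have sub: "{\<omega>\<in>space M. \<xi> \<omega> > x / \<eta> \<omega> \<and> \<eta> \<omega> \<in> {A..<A*q^N} \<and> \<eta> \<omega> \<le> D}
      \<subseteq> (\<Union>k\<in>{..<N}. {\<omega>\<in>space M. \<xi> \<omega> > th k \<and> \<eta> \<omega> \<in> cell A q k})"
  proof
    fix \<omega> assume w: "\<omega> \<in> {\<omega>\<in>space M. \<xi> \<omega> > x / \<eta> \<omega> \<and> \<eta> \<omega> \<in> {A..<A*q^N} \<and> \<eta> \<omega> \<le> D}"
    then obtain k where k: "k < N" "\<eta> \<omega> \<in> cell A q k" using cells_cover[OF A] by blast
    have epos: "\<eta> \<omega> > 0" using cell_pos[OF A k(2)] .
    have "\<eta> \<omega> \<le> min (A*q^(Suc k)) D" using k w by (auto simp: cell_def)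
    then have "th k \<le> x / \<eta> \<omega>" unfolding th_def using x epos by (intro divide_left_mono) auto
    moreover have "\<xi> \<omega> > x / \<eta> \<omega>" "\<omega> \<in> space M" using w by auto
    ultimately have "\<xi> \<omega> > th k" by linarith
    then show "\<omega> \<in> (\<Union>k\<in>{..<N}. {\<omega>\<in>space M. \<xi> \<omega> > th k \<and> \<eta> \<omega> \<in> cell A q k})"
      using k \<open>\<omega> \<in> space M\<close> by blast
  qed
  have sets: "{\<omega>\<in>space M. \<xi> \<omega> > th k \<and> \<eta> \<omega> \<in> cell A q k} \<in> sets M" for k
    by (rule nu_sets) (simp add: cell_def)
  have "measure M {\<omega>\<in>space M. \<xi> \<omega> > x / \<eta> \<omega> \<and> \<eta> \<omega> \<in> {A..<A*q^N} \<and> \<eta> \<omega> \<le> D}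
      \<le> measure M (\<Union>k\<in>{..<N}. {\<omega>\<in>space M. \<xi> \<omega> > th k \<and> \<eta> \<omega> \<in> cell A q k})"
    using sub sets by (intro finite_measure_mono) auto
  also have "\<dots> \<le> (\<Sum>k<N. nu (th k) (cell A q k))"
    unfolding nu_def using sets by (intro finite_measure_subadditive_finite) auto
  also have "\<dots> \<le> (\<Sum>k<N. c1 * U (th k) * Ih s0 (cell A q k))"
  proof (rule sum_mono)
    fix k assume "k \<in> {..<N}"
    have "th k \<ge> x / D" unfolding th_def using x mpos[of k] by (intro divide_left_mono) auto
    then have "th k \<ge> t0" using x by simp
    moreover have "0 < A * q^k" "A * q^k \<le> A * q^(Suc k)" using A by auto
    ultimately show "nu (th k) (cell A q k) \<le> c1 * U (th k) * Ih s0 (cell A q k)"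
      using bnd unfolding cell_def by blast
  qed
  finally show ?thesis by (simp add: th_def)
qed

lemma grid_lower:
  assumes bnd: "\<forall>t\<ge>t0. \<forall>a b. 0 < a \<longrightarrow> a \<le> b \<longrightarrow> c2 * U t * Ih s0 {a..<b} \<le> nu t {a..<b}"
    and A: "A > 0" "q > 1" and x: "x > 0" "x / (A*q^N) \<ge> t0"
  shows "(\<Sum>k<N. c2 * U (A*q^N + x / (A*q^k)) * Ih s0 (cell A q k))
     \<le> measure M {\<omega>\<in>space M. \<xi> \<omega> > \<eta> \<omega> + x / \<eta> \<omega> \<and> \<eta> \<omega> \<in> {A..<A*q^N}}"
proof -
  define th where "th k = A*q^N + x / (A*q^k)" for k
  have sets: "{\<omega>\<in>space M. \<xi> \<omega> > th k \<and> \<eta> \<omega> \<in> cell A q k} \<in> sets M" for k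
    by (rule nu_sets) (simp add: cell_def)
  have "(\<Sum>k<N. c2 * U (th k) * Ih s0 (cell A q k)) \<le> (\<Sum>k<N. nu (th k) (cell A q k))"
  proof (rule sum_mono)
    fix k assume "k \<in> {..<N}"
    then have kN: "k \<le> N" by simp
    have "A * q^k \<le> A * q^N" using A kN by (intro mult_left_mono power_increasing) auto
    then have "x / (A*q^N) \<le> x / (A*q^k)" using A x by (intro divide_left_mono) auto
    moreover have "A*q^N \<ge> 0" using A by simp
    ultimately have "th k \<ge> t0" unfolding th_def using x by linarith
    moreover have "0 < A * q^k" "A * q^k \<le> A * q^(Suc k)" using A by auto
    ultimately show "c2 * U (th k) * Ih s0 (cell A q k) \<le> nu (th k) (cell A q k)"
      using bnd unfolding cell_def by blast
  qed
  also have "\<dots> = measure M (\<Union>k\<in>{..<N}. {\<omega>\<in>space M. \<xi> \<omega> > th k \<and> \<eta> \<omega> \<in> cell A q k})"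
    unfolding nu_def
  proof (rule finite_measure_finite_Union[symmetric])
    show "finite {..<N}" by simp
    show "(\<lambda>k. {\<omega>\<in>space M. \<xi> \<omega> > th k \<and> \<eta> \<omega> \<in> cell A q k}) ` {..<N} \<subseteq> sets M" using sets by auto
    show "disjoint_family_on (\<lambda>k. {\<omega>\<in>space M. \<xi> \<omega> > th k \<and> \<eta> \<omega> \<in> cell A q k}) {..<N}"
      using cells_disjoint[OF A] unfolding disjoint_family_on_def by blast
  qed
  also have "\<dots> \<le> measure M {\<omega>\<in>space M. \<xi> \<omega> > \<eta> \<omega> + x / \<eta> \<omega> \<and> \<eta> \<omega> \<in> {A..<A*q^N}}"
  proof (rule finite_measure_mono)
    show "{\<omega>\<in>space M. \<xi> \<omega> > \<eta> \<omega> + x / \<eta> \<omega> \<and> \<eta> \<omega> \<in> {A..<A*q^N}} \<in> sets M" by measurable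
    show "(\<Union>k\<in>{..<N}. {\<omega>\<in>space M. \<xi> \<omega> > th k \<and> \<eta> \<omega> \<in> cell A q k}) \<subseteq> {\<omega>\<in>space M. \<xi> \<omega> > \<eta> \<omega> + x / \<eta> \<omega> \<and> \<eta> \<omega> \<in> {A..<A*q^N}}"
    proof (intro subsetI)
      fix \<omega> assume "\<omega> \<in> (\<Union>k\<in>{..<N}. {\<omega>\<in>space M. \<xi> \<omega> > th k \<and> \<eta> \<omega> \<in> cell A q k})"
      then obtain k where k: "k < N" "\<omega> \<in> space M" "\<xi> \<omega> > th k" "\<eta> \<omega> \<in> cell A q k" by auto
      have epos: "\<eta> \<omega> > 0" using cell_pos[OF A k(4)] .
      have Sk: "Suc k \<le> N" using k by simp
      have "A * q^(Suc k) \<le> A * q^N" using A Sk by (intro mult_left_mono power_increasing) auto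
      moreover have "\<eta> \<omega> < A*q^(Suc k)" "A * q^k \<le> \<eta> \<omega>" using k(4) by (auto simp: cell_def)
      moreover have "A \<le> A * q^k" using A by simp
      ultimately have e1: "\<eta> \<omega> < A*q^N" "A \<le> \<eta> \<omega>" by linarith+
      have Aqk: "A*q^k > 0" using A by simp
      have "x / \<eta> \<omega> \<le> x / (A*q^k)" using k(4) x epos Aqk by (intro divide_left_mono) (auto simp: cell_def)
      then have "\<eta> \<omega> + x / \<eta> \<omega> < th k" using e1 by (simp add: th_def)
      then show "\<omega> \<in> {\<omega>\<in>space M. \<xi> \<omega> > \<eta> \<omega> + x / \<eta> \<omega> \<and> \<eta> \<omega> \<in> {A..<A*q^N}}"
        using k e1 by auto
    qed
  qed
  finally show ?thesis by (simp add: th_def)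
qed

end


lemma ccdf_distr: "f \<in> borel_measurable M \<Longrightarrow> ccdf (distr M borel f) x = measure M {\<omega>\<in>space M. f \<omega> > x}"
  unfolding ccdf_def by (subst measure_distr) (auto intro!: arg_cong[where f="measure M"])

lemma cube_bound:
  fixes a :: real assumes "0 \<le> a" "a \<le> 1"
  shows "1 - 3*a \<le> (1-a)*(1-a)*(1-a)"
proof -
  have "(1-a)*(1-a) = 1 - 2*a + a*a" by (simp add: algebra_simps)
  then have s: "(1-a)*(1-a) \<ge> 1 - 2*a" using assms by (simp add: zero_le_mult_iff)
  have "(1-a)*(1-a)*(1-a) \<ge> (1 - 2*a)*(1-a)" using s assms by (intro mult_right_mono) auto
  moreover have "(1 - 2*a)*(1-a) = 1 - 3*a + 2*(a*a)" by (simp add: algebra_simps)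
  moreover have "a*a \<ge> 0" by simp
  ultimately show ?thesis by linarith
qed

lemma filterlim_times_const: "(y::real) > 0 \<Longrightarrow> filterlim (\<lambda>x. x * y) at_top at_top"
  using filterlim_tendsto_pos_mult_at_top[OF tendsto_const[of y] _ filterlim_ident] by (simp add: mult.commute)

lemma filterlim_plus_const: "filterlim (\<lambda>x. x + (B::real)) at_top at_top"
  using filterlim_tendsto_add_at_top[OF tendsto_const[of B] filterlim_ident] by (simp add: add.commute)

locale cd2 = cdsetup M \<xi> \<eta> s0 for M :: "'a measure" and \<xi> \<eta> s0 +
  fixes \<alpha> :: real
  assumes lt: "long_tailed (distr M borel \<xi>)" and alpha: "\<alpha> \<ge> 0"
    and rv: "reg_var \<alpha> (distr M borel (\<lambda>\<omega>. \<xi> \<omega> - \<eta> \<omega>))"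
begin

definition Fb where "Fb x = measure M {\<omega>\<in>space M. \<xi> \<omega> - \<eta> \<omega> > x}"

lemma ccdf_U: "ccdf (distr M borel \<xi>) x = U x"
  unfolding U_def by (rule ccdf_distr) measurable

lemma ccdf_F: "ccdf (distr M borel (\<lambda>\<omega>. \<xi> \<omega> - \<eta> \<omega>)) x = Fb x"
  unfolding Fb_def by (rule ccdf_distr) measurable

lemma U_shift:
  assumes "B \<ge> 0" shows "((\<lambda>x. U (x + B) / U x) \<longlongrightarrow> 1) at_top"
proof (cases "B = 0")
  case True
  then show ?thesis using Upos by (simp add: less_imp_neq[symmetric])
next
  case False
  then have B: "B > 0" using assms by simp
  have "((\<lambda>x. U (x - B) / U x) \<longlongrightarrow> 1) at_top"
    using lt B unfolding long_tailed_def ccdf_U by blast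
  from filterlim_compose[OF this filterlim_plus_const[of B]]
  have "((\<lambda>x. U x / U (x + B)) \<longlongrightarrow> 1) at_top" by simp
  from tendsto_inverse[OF this] show ?thesis by simp
qed

lemma Fb_le_U: "Fb x \<le> U x"
  unfolding Fb_def U_def
proof (rule finite_measure_mono_AE)
  show "AE \<omega> in M. \<omega> \<in> {\<omega> \<in> space M. x < \<xi> \<omega> - \<eta> \<omega>} \<longrightarrow> \<omega> \<in> {\<omega> \<in> space M. x < \<xi> \<omega>}"
    using etapos by eventually_elim auto
  show "{\<omega> \<in> space M. x < \<xi> \<omega>} \<in> sets M" by measurable
qed

lemma S_exhaust: "(\<lambda>n. Ih s0 (cellseq n)) \<longlonglongrightarrow> 1"
  using Ih_exhaust[OF s0int] Z1 by simp

lemma FU: "((\<lambda>x. Fb x / U x) \<longlongrightarrow> 1) at_top"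
proof (rule tendsto_from_bounds)
  fix e :: real assume e: "e > 0"
  define e' where "e' = min e 1 / 4"
  have e': "0 < e'" "e' < 1" "3 * e' \<le> e" using e by (auto simp: e'_def)
  have "eventually (\<lambda>n. Ih s0 (cellseq n) > 1 - e') sequentially"
    using S_exhaust e' by (intro order_tendstoD(1)) auto
  then obtain n where n: "Ih s0 (cellseq n) > 1 - e'" by (auto simp: eventually_sequentially)
  define A where "A = 1 / (real n + 1)"
  define B where "B = real n + 1"
  have AB: "0 < A" "A \<le> B" "B \<ge> 0" unfolding A_def B_def by (auto simp: divide_le_eq) (smt (verit) of_nat_0_le_iff mult_le_cancel_left1)
  obtain t0 where t0: "\<forall>t\<ge>t0. \<forall>a b. 0 < a \<longrightarrow> a \<le> b \<longrightarrow> nu t {a..<b} \<le> (1+e') * U t * Ih s0 {a..<b}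
             \<and> (1-e') * U t * Ih s0 {a..<b} \<le> nu t {a..<b}" using step1[OF e'(1,2)] by blast
  have ev1: "eventually (\<lambda>x. U (x + B) / U x > 1 - e') at_top"
    using U_shift[OF AB(3)] e' by (intro order_tendstoD(1)) auto
  have ev2: "eventually (\<lambda>x. x + B \<ge> t0) at_top"
    using filterlim_plus_const[of B] by (simp add: filterlim_at_top)
  show "eventually (\<lambda>x. 1 - e \<le> Fb x / U x \<and> Fb x / U x \<le> 1 + e) at_top"
    using ev1 ev2
  proof eventually_elim
    case (elim x)
    have u: "U x > 0" "U (x + B) > 0" by (rule Upos)+
    have up: "Fb x / U x \<le> 1" using Fb_le_U u by (simp add: divide_le_eq)
    have s1: "(1-e') * U (x+B) * Ih s0 {A..<B} \<le> nu (x+B) {A..<B}"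
      using t0 elim(2) AB by blast
    have "nu (x+B) {A..<B} \<le> Fb x" unfolding nu_def Fb_def
      by (intro finite_measure_mono) (auto, measurable)
    have uB: "U (x + B) \<ge> (1-e') * U x" using elim(1) u by (simp add: field_simps)
    have S: "Ih s0 {A..<B} \<ge> 1 - e'" using n by (simp add: A_def B_def cellseq_def)
    have "(1-e') * ((1-e') * U x) * (1-e') \<le> (1-e') * U (x+B) * Ih s0 {A..<B}"
      using uB S e' u by (intro mult_mono mult_left_mono) auto
    then have "(1-e')*(1-e')*(1-e') * U x \<le> Fb x" using s1 \<open>nu (x+B) {A..<B} \<le> Fb x\<close> by (simp add: algebra_simps)
    moreover have "1 - e \<le> (1-e')*(1-e')*(1-e')" using cube_bound[of e'] e' by linarith
    ultimately have "(1 - e) * U x \<le> Fb x" using u by (meson mult_right_mono order_trans less_imp_le)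
    then have "1 - e \<le> Fb x / U x" using u by (simp add: le_divide_eq)
    then show ?case using up e by simp
  qed
qed

lemma Fb_pos_ev: "eventually (\<lambda>x. Fb x > 0) at_top"
proof -
  have "eventually (\<lambda>x. Fb x / U x > 1/2) at_top" using FU by (intro order_tendstoD(1)) auto
  then show ?thesis
  proof eventually_elim
    case (elim x)
    have "U x < 2 * Fb x" using elim Upos[of x] by (simp add: field_simps)
    with Upos[of x] show ?case by linarith
  qed
qed

lemma U_rv:
  assumes y: "y > 0" shows "((\<lambda>x. U (x*y) / U x) \<longlongrightarrow> y powr (-\<alpha>)) at_top"
proof -
  have r: "((\<lambda>x. Fb (x*y) / Fb x) \<longlongrightarrow> y powr (-\<alpha>)) at_top"
    using rv y unfolding reg_var_def ccdf_F by blast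
  have f2: "((\<lambda>x. Fb (x*y) / U (x*y)) \<longlongrightarrow> 1) at_top"
    using filterlim_compose[OF FU filterlim_times_const[OF y]] by simp
  have lim: "((\<lambda>x. inverse (Fb (x*y) / U (x*y)) * (Fb (x*y) / Fb x) * (Fb x / U x)) \<longlongrightarrow> inverse 1 * y powr (-\<alpha>) * 1) at_top"
    by (intro tendsto_mult tendsto_inverse f2 r FU) auto
  have ev: "eventually (\<lambda>x. Fb (x*y) > 0 \<and> Fb x > 0) at_top"
    using Fb_pos_ev filterlim_iff[THEN iffD1, OF filterlim_times_const[OF y], rule_format, OF Fb_pos_ev]
    by (auto elim: eventually_conj)
  have eq: "eventually (\<lambda>x. inverse (Fb (x*y) / U (x*y)) * (Fb (x*y) / Fb x) * (Fb x / U x) = U (x*y) / U x) at_top"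
    using ev by eventually_elim (use Upos in \<open>auto simp: field_simps\<close>)
  have "((\<lambda>x. U (x*y) / U x) \<longlongrightarrow> inverse 1 * y powr (-\<alpha>) * 1) at_top"
    using tendsto_cong[OF eq] lim by blast
  then show ?thesis by simp
qed

end


context cd2 begin

definition P where "P x = measure M {\<omega>\<in>space M. (\<xi> \<omega> - \<eta> \<omega>) * \<eta> \<omega> > x}"
definition ha where "ha y = y powr \<alpha> * s0 y"

lemma ha_nonneg: "y > 0 \<Longrightarrow> ha y \<ge> 0"
  unfolding ha_def using s0pos[of y] by simp

lemma Ih_mono:
  assumes h: "integrable M (\<lambda>\<omega>. h (\<eta> \<omega>))" and hp: "\<And>y. y > 0 \<Longrightarrow> h y \<ge> 0"
    and B: "B1 \<subseteq> B2" "B1 \<in> sets borel" "B2 \<in> sets borel"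
  shows "Ih h B1 \<le> Ih h B2"
  unfolding Ih_def
proof (rule integral_mono_AE)
  show "integrable M (\<lambda>\<omega>. indicator B1 (\<eta> \<omega>) * h (\<eta> \<omega>))" by (rule int_ind[OF h B(2)])
  show "integrable M (\<lambda>\<omega>. indicator B2 (\<eta> \<omega>) * h (\<eta> \<omega>))" by (rule int_ind[OF h B(3)])
  show "AE \<omega> in M. indicator B1 (\<eta> \<omega>) * h (\<eta> \<omega>) \<le> indicator B2 (\<eta> \<omega>) * h (\<eta> \<omega>)"
    using etapos
  proof eventually_elim
    case (elim \<omega>)
    then show ?case using hp[OF elim] B(1) by (auto simp: indicator_def)
  qed
qed

lemma Ih_UNIV: "Ih h UNIV = (\<integral>\<omega>. h (\<eta> \<omega>) \<partial>M)"
  unfolding Ih_def by simp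

lemma Ih_cmult: "Ih (\<lambda>y. c * h y) B = c * Ih h B"
  unfolding Ih_def by (simp add: algebra_simps)

lemma cell_bounds:
  assumes Wint: "integrable M (\<lambda>\<omega>. ha (\<eta> \<omega>))" and A: "A > 0" "q > 1"
  shows "(A*q^k) powr \<alpha> * Ih s0 (cell A q k) \<le> Ih ha (cell A q k)"
    and "Ih ha (cell A q k) \<le> (A*q^(Suc k)) powr \<alpha> * Ih s0 (cell A q k)"
proof -
  have cb: "cell A q k \<in> sets borel" by (simp add: cell_def)
  have i1: "integrable M (\<lambda>\<omega>. indicator (cell A q k) (\<eta> \<omega>) * ha (\<eta> \<omega>))" by (rule int_ind[OF Wint cb])
  have i2: "integrable M (\<lambda>\<omega>. indicator (cell A q k) (\<eta> \<omega>) * (c * s0 (\<eta> \<omega>)))" for c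
    using int_ind[of "\<lambda>y. c * s0 y", OF _ cb] s0int by simp
  have "Ih (\<lambda>y. (A*q^k) powr \<alpha> * s0 y) (cell A q k) \<le> Ih ha (cell A q k)"
    unfolding Ih_def
  proof (rule integral_mono[OF i2 i1])
    fix \<omega> show "indicator (cell A q k) (\<eta> \<omega>) * ((A*q^k) powr \<alpha> * s0 (\<eta> \<omega>)) \<le> indicator (cell A q k) (\<eta> \<omega>) * ha (\<eta> \<omega>)"
    proof (cases "\<eta> \<omega> \<in> cell A q k")
      case True
      then have p: "\<eta> \<omega> > 0" using cell_pos[OF A] by blast
      have "(A*q^k) powr \<alpha> \<le> \<eta> \<omega> powr \<alpha>" using True A alpha by (intro powr_mono2) (auto simp: cell_def)
      then show ?thesis using True s0pos[OF p] by (simp add: ha_def)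
    qed simp
  qed
  then show "(A*q^k) powr \<alpha> * Ih s0 (cell A q k) \<le> Ih ha (cell A q k)" by (simp add: Ih_cmult)
  have "Ih ha (cell A q k) \<le> Ih (\<lambda>y. (A*q^(Suc k)) powr \<alpha> * s0 y) (cell A q k)"
    unfolding Ih_def
  proof (rule integral_mono[OF i1 i2])
    fix \<omega> show "indicator (cell A q k) (\<eta> \<omega>) * ha (\<eta> \<omega>) \<le> indicator (cell A q k) (\<eta> \<omega>) * ((A*q^(Suc k)) powr \<alpha> * s0 (\<eta> \<omega>))"
    proof (cases "\<eta> \<omega> \<in> cell A q k")
      case True
      then have p: "\<eta> \<omega> > 0" using cell_pos[OF A] by blast
      have "\<eta> \<omega> powr \<alpha> \<le> (A*q^(Suc k)) powr \<alpha>" using True A alpha p by (intro powr_mono2) (auto simp: cell_def)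
      then show ?thesis using True s0pos[OF p] by (simp add: ha_def)
    qed simp
  qed
  then show "Ih ha (cell A q k) \<le> (A*q^(Suc k)) powr \<alpha> * Ih s0 (cell A q k)" by (simp add: Ih_cmult)
qed

lemma powr_Suc_split: "A > 0 \<Longrightarrow> q > 0 \<Longrightarrow> (A*q^(Suc k)) powr \<alpha> = q powr \<alpha> * (A*q^k) powr \<alpha>"
  by (simp add: powr_mult[symmetric] algebra_simps)

lemma S_nonneg: "B \<subseteq> {0<..} \<Longrightarrow> B \<in> sets borel \<Longrightarrow> Ih s0 B \<ge> 0"
  using Ih_mono[OF s0int _ _ _ _, of "{}" B] s0pos by (simp add: Ih_def less_imp_le)

lemma P_upper_sub: "P x \<le> measure M {\<omega>\<in>space M. \<xi> \<omega> > x / \<eta> \<omega> \<and> \<eta> \<omega> > 0}"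
  unfolding P_def
proof (rule finite_measure_mono_AE)
  show "AE \<omega> in M. \<omega> \<in> {\<omega> \<in> space M. x < (\<xi> \<omega> - \<eta> \<omega>) * \<eta> \<omega>} \<longrightarrow> \<omega> \<in> {\<omega>\<in>space M. \<xi> \<omega> > x / \<eta> \<omega> \<and> \<eta> \<omega> > 0}"
    using etapos
  proof eventually_elim
    case (elim \<omega>)
    show ?case
    proof
      assume a: "\<omega> \<in> {\<omega> \<in> space M. x < (\<xi> \<omega> - \<eta> \<omega>) * \<eta> \<omega>}"
      then have "x / \<eta> \<omega> < \<xi> \<omega> - \<eta> \<omega>" using elim by (simp add: divide_less_eq)
      then show "\<omega> \<in> {\<omega>\<in>space M. \<xi> \<omega> > x / \<eta> \<omega> \<and> \<eta> \<omega> > 0}" using a elim by auto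
    qed
  qed
  show "{\<omega>\<in>space M. \<xi> \<omega> > x / \<eta> \<omega> \<and> \<eta> \<omega> > 0} \<in> sets M" by measurable
qed

lemma P_lower_sub: "A > 0 \<Longrightarrow> measure M {\<omega>\<in>space M. \<xi> \<omega> > \<eta> \<omega> + x / \<eta> \<omega> \<and> \<eta> \<omega> \<in> {A..<B}} \<le> P x"
  unfolding P_def
proof (rule finite_measure_mono)
  assume A: "A > 0"
  show "{\<omega>\<in>space M. \<xi> \<omega> > \<eta> \<omega> + x / \<eta> \<omega> \<and> \<eta> \<omega> \<in> {A..<B}} \<subseteq> {\<omega> \<in> space M. x < (\<xi> \<omega> - \<eta> \<omega>) * \<eta> \<omega>}"
  proof (intro subsetI)
    fix \<omega> assume a: "\<omega> \<in> {\<omega>\<in>space M. \<xi> \<omega> > \<eta> \<omega> + x / \<eta> \<omega> \<and> \<eta> \<omega> \<in> {A..<B}}"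
    then have p: "\<eta> \<omega> > 0" using A by auto
    have "x / \<eta> \<omega> < \<xi> \<omega> - \<eta> \<omega>" using a by auto
    then have "x < (\<xi> \<omega> - \<eta> \<omega>) * \<eta> \<omega>" using p by (simp add: divide_less_eq)
    then show "\<omega> \<in> {\<omega> \<in> space M. x < (\<xi> \<omega> - \<eta> \<omega>) * \<eta> \<omega>}" using a by auto
  qed
  show "{\<omega> \<in> space M. x < (\<xi> \<omega> - \<eta> \<omega>) * \<eta> \<omega>} \<in> sets M" by measurable
qed

lemma U_ev_upper:
  assumes y: "y > 0" and e: "e > 0"
  shows "eventually (\<lambda>x. U (x / y) \<le> (1+e) * y powr \<alpha> * U x) at_top"
proof -
  have "((\<lambda>x. U (x * (1/y)) / U x) \<longlongrightarrow> (1/y) powr (-\<alpha>)) at_top" using U_rv[of "1/y"] y by simp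
  moreover have "(\<lambda>x. U (x * (1/y)) / U x) = (\<lambda>x. U (x / y) / U x)" by simp
  ultimately have "((\<lambda>x. U (x / y) / U x) \<longlongrightarrow> (1/y) powr (-\<alpha>)) at_top" by simp
  moreover have "(1/y) powr (-\<alpha>) = y powr \<alpha>" using y by (simp add: powr_minus_divide powr_divide)
  ultimately have l: "((\<lambda>x. U (x / y) / U x) \<longlongrightarrow> y powr \<alpha>) at_top" by simp
  have "y powr \<alpha> < (1+e) * y powr \<alpha>" using y e by simp
  from order_tendstoD(2)[OF l this] show ?thesis
    by eventually_elim (use Upos in \<open>auto simp: divide_less_eq less_imp_le\<close>)
qed

lemma U_ev_lower:
  assumes y: "y > 0" and e: "e > 0"
  shows "eventually (\<lambda>x. (1-e) * y powr (-\<alpha>) * U x \<le> U (x * y)) at_top"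
proof -
  have l: "((\<lambda>x. U (x * y) / U x) \<longlongrightarrow> y powr (-\<alpha>)) at_top" using U_rv y by simp
  have "(1-e) * y powr (-\<alpha>) < y powr (-\<alpha>)" using y e by simp
  from order_tendstoD(1)[OF l this] show ?thesis
    by eventually_elim (use Upos in \<open>auto simp: less_divide_eq less_imp_le\<close>)
qed

end


lemma exists_q_near1:
  fixes f :: "real \<Rightarrow> real"
  assumes "(f \<longlongrightarrow> 1) (at_right 1)" "d > 0"
  shows "\<exists>q>1. f q > 1 - d \<and> f q < 1 + d"
proof -
  have "eventually (\<lambda>q. f q > 1 - d \<and> f q < 1 + d) (at_right 1)"
    using assms by (auto intro!: eventually_conj order_tendstoD)
  then obtain b where b: "b > 1" "\<forall>q>1. q < b \<longrightarrow> f q > 1 - d \<and> f q < 1 + d"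
    unfolding eventually_at_right_field by auto
  show ?thesis using b by (intro exI[of _ "(1+b)/2"]) auto
qed

lemma qa_lim: "((\<lambda>q::real. 1 / (q powr a * q powr a)) \<longlongrightarrow> 1) (at_right 1)"
proof -
  have "((\<lambda>q::real. 1 / (q powr a * q powr a)) \<longlongrightarrow> 1 / (1 powr a * 1 powr a)) (at_right 1)"
    by (intro tendsto_intros) auto
  then show ?thesis by simp
qed

lemma qa_lim2: "((\<lambda>q::real. q powr a) \<longlongrightarrow> 1) (at_right 1)"
proof -
  have "((\<lambda>q::real. q powr a) \<longlongrightarrow> 1 powr a) (at_right 1)"
    by (intro tendsto_intros) auto
  then show ?thesis by simp
qed

context cd2 begin

lemma lower_ev:
  assumes Wint: "integrable M (\<lambda>\<omega>. ha (\<eta> \<omega>))" and e: "e > 0"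
  shows "eventually (\<lambda>x. (\<integral>\<omega>. ha (\<eta> \<omega>) \<partial>M) - e \<le> P x / U x) at_top"
proof -
  define W where "W = (\<integral>\<omega>. ha (\<eta> \<omega>) \<partial>M)"
  have W0: "W \<ge> 0" unfolding W_def using etapos
    by (intro integral_nonneg_AE) (auto elim!: eventually_mono intro: ha_nonneg)
  define \<delta> where "\<delta> = min (e / (2*(W+1))) 1"
  have d: "\<delta> > 0" "\<delta> \<le> 1" using e W0 by (auto simp: \<delta>_def)
  have dW: "\<delta> * W \<le> e/2"
  proof -
    have "\<delta> * W \<le> (e / (2*(W+1))) * W" using W0 by (intro mult_right_mono) (auto simp: \<delta>_def)
    also have "\<dots> \<le> e/2" using W0 e by (simp add: field_simps)
    finally show ?thesis .
  qed
  have "eventually (\<lambda>n. Ih ha (cellseq n) > W - e/2) sequentially"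
    using Ih_exhaust[OF Wint] e unfolding W_def by (intro order_tendstoD(1)) auto
  then obtain n where n: "Ih ha (cellseq n) > W - e/2" by (auto simp: eventually_sequentially)
  define A where "A = 1 / (real n + 1)"
  have A: "A > 0" by (simp add: A_def)
  obtain q where q: "q > 1" "1 / (q powr \<alpha> * q powr \<alpha>) > 1 - \<delta>/2"
    using exists_q_near1[OF qa_lim[of \<alpha>], of "\<delta>/2"] d by auto
  define qa where "qa = q powr \<alpha>"
  have qa: "qa > 0" using q by (simp add: qa_def)
  define e1 where "e1 = min (\<delta>/4) (1/2)"
  have e1: "0 < e1" "e1 < 1" "2 * e1 \<le> \<delta>/2" using d by (auto simp: e1_def)
  obtain N where N: "(real n + 1) / A < q^N" using real_arch_pow[OF q(1)] by blast
  have AN: "real n + 1 < A * q^N" using N A by (simp add: divide_less_eq mult.commute)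
  define L where "L = Ih ha {A..<A*q^N}"
  have hap: "\<And>y. 0 < y \<Longrightarrow> 0 \<le> ha y" by (rule ha_nonneg)
  have L1: "L > W - e/2"
  proof -
    have "Ih ha (cellseq n) \<le> L" unfolding L_def cellseq_def
      using AN by (intro Ih_mono[OF Wint hap]) (auto simp: A_def)
    then show ?thesis using n by simp
  qed
  have L2: "L \<le> W" unfolding L_def W_def Ih_UNIV[symmetric] by (intro Ih_mono[OF Wint hap]) auto
  have L3: "L \<ge> 0" unfolding L_def using Ih_mono[OF Wint hap, of "{}" "{A..<A*q^N}"] by (simp add: Ih_def)
  define c where "c = (1-e1)*(1-e1) / (qa*qa)"
  have c: "c \<ge> 1 - \<delta>"
  proof -
    have "(1-e1)*(1-e1) \<ge> 1 - 2*e1" using e1 by (simp add: algebra_simps)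
    then have a: "(1-e1)*(1-e1) \<ge> 1 - \<delta>/2" using e1 by linarith
    have b: "1/(qa*qa) \<ge> 1 - \<delta>/2" using q by (simp add: qa_def)
    have "(1 - \<delta>/2) * (1 - \<delta>/2) \<le> (1-e1)*(1-e1) * (1/(qa*qa))"
      using a b d by (intro mult_mono) auto
    moreover have "(1 - \<delta>/2) * (1 - \<delta>/2) = 1 - \<delta> + \<delta>*\<delta>/4" by (simp add: field_simps)
    ultimately have "1 - \<delta> + \<delta>*\<delta>/4 \<le> c" by (simp add: c_def)
    moreover have "\<delta>*\<delta>/4 \<ge> 0" by simp
    ultimately show ?thesis by linarith
  qed
  obtain t0 where t0: "\<forall>t\<ge>t0. \<forall>a b. 0 < a \<longrightarrow> a \<le> b \<longrightarrow> nu t {a..<b} \<le> (1+e1) * U t * Ih s0 {a..<b}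
             \<and> (1-e1) * U t * Ih s0 {a..<b} \<le> nu t {a..<b}" using step1[OF e1(1,2)] by blast
  then have t0l: "\<forall>t\<ge>t0. \<forall>a b. 0 < a \<longrightarrow> a \<le> b \<longrightarrow> (1-e1) * U t * Ih s0 {a..<b} \<le> nu t {a..<b}" by blast
  define ck where "ck k = q / (A*q^k)" for k
  have ckp: "ck k > 0" for k using A q by (simp add: ck_def)
  have Aqk: "A * q^k > 0" for k using A q by simp
  have ev_a: "eventually (\<lambda>x::real. x > 0) at_top" by (rule eventually_gt_at_top)
  have ev_b: "eventually (\<lambda>x. x / (A*q^N) \<ge> t0) at_top"
    using eventually_ge_at_top[of "t0 * (A*q^N)"] by eventually_elim (use Aqk in \<open>simp add: le_divide_eq\<close>)
  have ev_c: "eventually (\<lambda>x. \<forall>k\<in>{..<N}. A*q^N \<le> (q-1) * (x / (A*q^k))) at_top"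
  proof (rule eventually_ball_finite, simp, intro ballI)
    fix k
    show "eventually (\<lambda>x. A*q^N \<le> (q-1) * (x / (A*q^k))) at_top"
      using eventually_ge_at_top[of "A*q^N * (A*q^k) / (q-1)"]
      by eventually_elim (use q Aqk in \<open>simp add: field_simps\<close>)
  qed
  have ev_d: "eventually (\<lambda>x. \<forall>k\<in>{..<N}. (1-e1) * ck k powr (-\<alpha>) * U x \<le> U (x * ck k)) at_top"
    by (rule eventually_ball_finite) (use U_ev_lower[OF ckp e1(1)] in auto)
  show ?thesis using ev_a ev_b ev_c ev_d
  proof eventually_elim
    case (elim x)
    have ux: "U x > 0" by (rule Upos)
    have key: "c * Ih ha (cell A q k) * U x \<le> (1-e1) * U (A*q^N + x/(A*q^k)) * Ih s0 (cell A q k)"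
      if k: "k < N" for k
    proof -
      define ak where "ak = (A*q^k) powr \<alpha>"
      define Sk where "Sk = Ih s0 (cell A q k)"
      have "cell A q k \<subseteq> {0<..}" using cell_pos[OF A q(1)] by blast
      then have Sk0: "Sk \<ge> 0" unfolding Sk_def by (rule S_nonneg) (simp add: cell_def)
      have ak0: "ak \<ge> 0" by (simp add: ak_def)
      have cb: "Ih ha (cell A q k) \<le> qa * ak * Sk"
        using cell_bounds(2)[OF Wint A q(1), of k] powr_Suc_split[OF A, of q k] q
        by (simp add: ak_def Sk_def qa_def)
      have th: "A*q^N + x/(A*q^k) \<le> x * ck k"
      proof -
        have "A*q^N + x/(A*q^k) \<le> (q-1) * (x / (A*q^k)) + x/(A*q^k)" using elim(3) k by auto
        also have "\<dots> = ((q-1) + 1) * (x / (A*q^k))" by (simp only: distrib_right mult_1_left)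
        also have "\<dots> = x * ck k" by (simp add: ck_def)
        finally show ?thesis .
      qed
      have U1: "U (x * ck k) \<le> U (A*q^N + x/(A*q^k))" by (rule U_antimono[OF th])
      have U2: "(1-e1) * ck k powr (-\<alpha>) * U x \<le> U (x * ck k)" using elim(4) k by auto
      have cpow: "ck k powr (-\<alpha>) = ak / qa"
        using A q Aqk[of k] by (simp add: ck_def ak_def qa_def powr_minus_divide powr_divide)
      have "c * Ih ha (cell A q k) * U x \<le> c * (qa * ak * Sk) * U x"
        using cb ux e1 qa by (intro mult_right_mono mult_left_mono) (auto simp: c_def)
      also have "\<dots> = (1-e1) * ((1-e1) * (ak/qa) * U x) * Sk" using qa by (simp add: c_def field_simps)
      also have "\<dots> \<le> (1-e1) * U (A*q^N + x/(A*q^k)) * Sk"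
        using U1 U2 cpow e1 Sk0 by (intro mult_right_mono mult_left_mono) auto
      finally show ?thesis by (simp add: Sk_def)
    qed
    have "c * L * U x = (\<Sum>k<N. c * Ih ha (cell A q k) * U x)"
      unfolding L_def Ih_cells_sum[OF Wint A q(1), symmetric] by (simp add: sum_distrib_left sum_distrib_right)
    also have "\<dots> \<le> (\<Sum>k<N. (1-e1) * U (A*q^N + x/(A*q^k)) * Ih s0 (cell A q k))"
      using key by (intro sum_mono) auto
    also have "\<dots> \<le> measure M {\<omega>\<in>space M. \<xi> \<omega> > \<eta> \<omega> + x / \<eta> \<omega> \<and> \<eta> \<omega> \<in> {A..<A*q^N}}"
      by (rule grid_lower[OF t0l A q(1) elim(1) elim(2)])
    also have "\<dots> \<le> P x" by (rule P_lower_sub[OF A])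
    finally have "c * L \<le> P x / U x" using ux by (simp add: le_divide_eq)
    moreover have "(1 - \<delta>) * L \<le> c * L" using c L3 by (intro mult_right_mono) auto
    moreover have "(1 - \<delta>) * L \<ge> L - \<delta> * W" using L2 d by (simp add: algebra_simps)
    ultimately show ?case using L1 dW by (simp add: W_def)
  qed
qed

end


context cd2 begin

lemma upper_ev:
  assumes Wint: "integrable M (\<lambda>\<omega>. ha (\<eta> \<omega>))" and e: "e > 0"
    and tailP: "\<And>e. e > 0 \<Longrightarrow> \<exists>B0. \<forall>B\<ge>B0. eventually (\<lambda>x. measure M {\<omega>\<in>space M. \<xi> \<omega> > x / \<eta> \<omega> \<and> \<eta> \<omega> \<ge> B} \<le> e * U x) at_top"
  shows "eventually (\<lambda>x. P x / U x \<le> (\<integral>\<omega>. ha (\<eta> \<omega>) \<partial>M) + e) at_top"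
proof -
  define W where "W = (\<integral>\<omega>. ha (\<eta> \<omega>) \<partial>M)"
  have W0: "W \<ge> 0" unfolding W_def using etapos
    by (intro integral_nonneg_AE) (auto elim!: eventually_mono intro: ha_nonneg)
  define \<delta> where "\<delta> = min (e / (2*(W+1))) 1"
  have d: "\<delta> > 0" "\<delta> \<le> 1" using e W0 by (auto simp: \<delta>_def)
  have dW: "\<delta> * W \<le> e/2"
  proof -
    have "\<delta> * W \<le> (e / (2*(W+1))) * W" using W0 by (intro mult_right_mono) (auto simp: \<delta>_def)
    also have "\<dots> \<le> e/2" using W0 e by (simp add: field_simps)
    finally show ?thesis .
  qed
  define e1 where "e1 = min (min (e/6) (\<delta>/6)) (1/2)"
  have e1: "0 < e1" "e1 < 1" "e1 \<le> e/6" "e1 \<le> \<delta>/6" "e1 \<le> 1/2" using d e by (auto simp: e1_def)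
  obtain q where q: "q > 1" "q powr \<alpha> < 1 + \<delta>/4"
    using exists_q_near1[OF qa_lim2[of \<alpha>], of "\<delta>/4"] d by auto
  define qa where "qa = q powr \<alpha>"
  have qa: "qa > 0" "qa < 1 + \<delta>/4" using q by (auto simp: qa_def)
  have "eventually (\<lambda>n. Ih s0 (cellseq n) > 1 - e1) sequentially"
    using S_exhaust e1 by (intro order_tendstoD(1)) auto
  then obtain n where n: "Ih s0 (cellseq n) > 1 - e1" by (auto simp: eventually_sequentially)
  define A where "A = 1 / (real n + 1)"
  define Bn where "Bn = real n + 1"
  have A: "A > 0" "A \<le> 1" by (auto simp: A_def)
  have ABn: "A \<le> Bn" using A by (simp add: Bn_def)
  obtain B0 where B0: "\<forall>B\<ge>B0. eventually (\<lambda>x. measure M {\<omega>\<in>space M. \<xi> \<omega> > x / \<eta> \<omega> \<and> \<eta> \<omega> \<ge> B} \<le> e1 * U x) at_top"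
    using tailP[OF e1(1)] by blast
  obtain N where N: "max Bn B0 / A < q^N" using real_arch_pow[OF q(1)] by blast
  define D where "D = A * q^N"
  have DB: "D > Bn" "D \<ge> B0" using N A by (auto simp: D_def divide_less_eq mult.commute)
  have D0: "D > 0" using A q by (simp add: D_def)
  have AD: "A \<le> D" using A q by (simp add: D_def)
  obtain t0 where t0: "\<forall>t\<ge>t0. \<forall>a b. 0 < a \<longrightarrow> a \<le> b \<longrightarrow> nu t {a..<b} \<le> (1+e1) * U t * Ih s0 {a..<b}
             \<and> (1-e1) * U t * Ih s0 {a..<b} \<le> nu t {a..<b}" using step1[OF e1(1,2)] by blast
  then have t0u: "\<forall>t\<ge>t0. \<forall>a b. 0 < a \<longrightarrow> a \<le> b \<longrightarrow> nu t {a..<b} \<le> (1+e1) * U t * Ih s0 {a..<b}" by blast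
  have Aqk: "A * q^k > 0" for k using A q by simp
  define L where "L = Ih ha {A..<D}"
  have hap: "\<And>y. 0 < y \<Longrightarrow> 0 \<le> ha y" by (rule ha_nonneg)
  have L2: "L \<le> W" unfolding L_def W_def Ih_UNIV[symmetric] by (intro Ih_mono[OF Wint hap]) auto
  have ev_a: "eventually (\<lambda>x::real. x > 0) at_top" by (rule eventually_gt_at_top)
  have ev_b: "eventually (\<lambda>x. x / D \<ge> t0) at_top"
    using eventually_ge_at_top[of "t0 * D"] by eventually_elim (use D0 in \<open>simp add: le_divide_eq\<close>)
  have ev_c: "eventually (\<lambda>x. \<forall>k\<in>{..<N}. U (x / (A*q^(Suc k))) \<le> (1+e1) * (A*q^(Suc k)) powr \<alpha> * U x) at_top"
  proof (rule eventually_ball_finite)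
    show "\<forall>k\<in>{..<N}. eventually (\<lambda>x. U (x / (A*q^(Suc k))) \<le> (1+e1) * (A*q^(Suc k)) powr \<alpha> * U x) at_top"
      using U_ev_upper[OF Aqk e1(1)] by blast
  qed simp
  have ev_d: "eventually (\<lambda>x. measure M {\<omega>\<in>space M. \<xi> \<omega> > x / \<eta> \<omega> \<and> \<eta> \<omega> \<ge> D} \<le> e1 * U x) at_top"
    using B0 DB by blast
  show ?thesis using ev_a ev_b ev_c ev_d
  proof eventually_elim
    case (elim x)
    have ux: "U x > 0" by (rule Upos)
    define S1 where "S1 = {\<omega>\<in>space M. \<xi> \<omega> > x / \<eta> \<omega> \<and> \<eta> \<omega> > 0 \<and> \<eta> \<omega> < A}"
    define S2 where "S2 = {\<omega>\<in>space M. \<xi> \<omega> > x / \<eta> \<omega> \<and> \<eta> \<omega> \<in> {A..<A*q^N} \<and> \<eta> \<omega> \<le> D}"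
    define S3 where "S3 = {\<omega>\<in>space M. \<xi> \<omega> > x / \<eta> \<omega> \<and> \<eta> \<omega> \<ge> D}"
    have sets: "S1 \<in> sets M" "S2 \<in> sets M" "S3 \<in> sets M" unfolding S1_def S2_def S3_def by measurable
    have "P x \<le> measure M {\<omega>\<in>space M. \<xi> \<omega> > x / \<eta> \<omega> \<and> \<eta> \<omega> > 0}" by (rule P_upper_sub)
    also have "\<dots> \<le> measure M (S1 \<union> S2 \<union> S3)"
      using sets by (intro finite_measure_mono) (auto simp: S1_def S2_def S3_def D_def not_less)
    also have "\<dots> \<le> measure M S1 + measure M S2 + measure M S3"
      using sets measure_Un_le[of "S1 \<union> S2" M S3] measure_Un_le[of S1 M S2] by auto
    finally have Psum: "P x \<le> measure M S1 + measure M S2 + measure M S3" .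
    have m1: "measure M S1 \<le> 2 * e1 * U x"
    proof -
      define T where "T = {\<omega>\<in>space M. \<xi> \<omega> > x / A}"
      define T' where "T' = {\<omega>\<in>space M. \<xi> \<omega> > x / A \<and> \<eta> \<omega> \<in> {A..<Bn}}"
      have Ts: "T \<in> sets M" "T' \<in> sets M" "T' \<subseteq> T" unfolding T_def T'_def by (auto, measurable)
      have "S1 \<subseteq> T - T'"
      proof
        fix \<omega> assume w: "\<omega> \<in> S1"
        then have "x / A < x / \<eta> \<omega>" using elim(1) A by (intro divide_strict_left_mono) (auto simp: S1_def)
        then show "\<omega> \<in> T - T'" using w by (auto simp: S1_def T_def T'_def)
      qed
      then have "measure M S1 \<le> measure M (T - T')" using Ts by (intro finite_measure_mono) auto
      also have "\<dots> = U (x/A) - nu (x/A) {A..<Bn}"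
        using Ts by (simp add: finite_measure_Diff U_def nu_def T_def T'_def)
      also have "\<dots> \<le> U (x/A) - (1-e1) * U (x/A) * Ih s0 {A..<Bn}"
      proof -
        have "x / A \<ge> x / D" using elim(1) A AD by (intro divide_left_mono) auto
        then have "x / A \<ge> t0" using elim(2) by simp
        then show ?thesis using t0 A ABn by auto
      qed
      also have "\<dots> \<le> U (x/A) - (1-e1) * U (x/A) * (1-e1)"
      proof -
        have "Ih s0 {A..<Bn} \<ge> 1 - e1" using n by (simp add: A_def Bn_def cellseq_def)
        moreover have "(1-e1) * U (x/A) \<ge> 0" using e1 Upos[of "x/A"] by simp
        ultimately show ?thesis by (simp add: mult_left_mono)
      qed
      also have "\<dots> = (2*e1 - e1*e1) * U (x/A)" by (simp add: algebra_simps)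
      also have "\<dots> \<le> (2*e1) * U (x/A)" using Upos[of "x/A"] by (intro mult_right_mono) auto
      also have "\<dots> \<le> (2*e1) * U x"
      proof -
        have "x \<le> x / A" using elim(1) A by (simp add: le_divide_eq)
        then show ?thesis using e1 by (intro mult_left_mono U_antimono) auto
      qed
      finally show ?thesis by simp
    qed
    have m2: "measure M S2 \<le> (1+e1)*(1+e1)*qa * L * U x"
    proof -
      have "measure M S2 \<le> (\<Sum>k<N. (1+e1) * U (x / min (A*q^(Suc k)) D) * Ih s0 (cell A q k))"
        unfolding S2_def by (rule grid_upper[OF t0u A(1) q(1) D0 elim(1) elim(2)])
      also have "\<dots> \<le> (\<Sum>k<N. (1+e1)*(1+e1)*qa * Ih ha (cell A q k) * U x)"
      proof (rule sum_mono)
        fix k assume k: "k \<in> {..<N}"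
        have "A*q^(Suc k) \<le> D" using k A q unfolding D_def by (intro mult_left_mono power_increasing) auto
        then have mn: "min (A*q^(Suc k)) D = A*q^(Suc k)" by simp
        define ak where "ak = (A*q^k) powr \<alpha>"
        define Sk where "Sk = Ih s0 (cell A q k)"
        have "cell A q k \<subseteq> {0<..}" using cell_pos[OF A(1) q(1)] by blast
        then have Sk0: "Sk \<ge> 0" unfolding Sk_def by (rule S_nonneg) (simp add: cell_def)
        have cb: "ak * Sk \<le> Ih ha (cell A q k)"
          using cell_bounds(1)[OF Wint A(1) q(1), of k] by (simp add: ak_def Sk_def)
        have Uk0: "U (x / (A*q^(Suc k))) \<le> (1+e1) * (A*q^(Suc k)) powr \<alpha> * U x"
          using elim(3) k by blast
        have Uk: "U (x / (A*q^(Suc k))) \<le> (1+e1) * (qa * ak) * U x"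
          using Uk0 unfolding powr_Suc_split[OF A(1), of q k, OF order.strict_trans[OF zero_less_one q(1)]] by (simp add: ak_def qa_def)
        have "(1+e1) * U (x / min (A*q^(Suc k)) D) * Sk \<le> (1+e1) * ((1+e1) * (qa * ak) * U x) * Sk"
          unfolding mn using Uk e1 Sk0 by (intro mult_right_mono mult_left_mono) auto
        also have "\<dots> = (1+e1)*(1+e1)*qa * (ak * Sk) * U x" by (simp add: algebra_simps)
        also have "\<dots> \<le> (1+e1)*(1+e1)*qa * Ih ha (cell A q k) * U x"
          using cb e1 qa ux by (intro mult_right_mono mult_left_mono) auto
        finally show "(1+e1) * U (x / min (A*q^(Suc k)) D) * Ih s0 (cell A q k) \<le> (1+e1)*(1+e1)*qa * Ih ha (cell A q k) * U x"
          by (simp add: Sk_def)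
      qed
      also have "\<dots> = (1+e1)*(1+e1)*qa * L * U x"
        unfolding L_def D_def Ih_cells_sum[OF Wint A(1) q(1), symmetric] by (simp add: sum_distrib_left sum_distrib_right)
      finally show ?thesis .
    qed
    have m3: "measure M S3 \<le> e1 * U x" using elim(4) by (simp add: S3_def)
    have coef: "(1+e1)*(1+e1)*qa \<le> 1 + \<delta>"
    proof -
      have "(1+e1)*(1+e1) = 1 + 2*e1 + e1*e1" by (simp add: algebra_simps)
      moreover have "e1*e1 \<le> e1" using e1 by (simp add: mult_le_cancel_left1)
      ultimately have a: "(1+e1)*(1+e1) \<le> 1 + \<delta>/2" using e1 by linarith
      have "(1+e1)*(1+e1)*qa \<le> (1 + \<delta>/2) * (1 + \<delta>/4)"
        using a qa d by (intro mult_mono) auto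
      also have "\<dots> = 1 + 3*\<delta>/4 + \<delta>*\<delta>/8" by (simp add: field_simps)
      also have "\<dots> \<le> 1 + \<delta>"
      proof -
        have "\<delta>*\<delta> \<le> \<delta>" using d by (simp add: mult_le_cancel_left1)
        then have "\<delta>*\<delta>/8 \<le> \<delta>/8" by simp
        then show ?thesis using d by linarith
      qed
      finally show ?thesis .
    qed
    have L0: "L \<ge> 0" unfolding L_def using Ih_mono[OF Wint hap, of "{}" "{A..<D}"] by (simp add: Ih_def)
    have "(1+e1)*(1+e1)*qa * L \<le> (1 + \<delta>) * W" using coef L0 L2 d by (intro mult_mono) auto
    then have m2': "measure M S2 \<le> (1 + \<delta>) * W * U x" using m2 ux by (meson mult_right_mono order_trans less_imp_le)
    have "P x \<le> (2 * e1 + (1 + \<delta>) * W + e1) * U x" using Psum m1 m2' m3 by (simp add: algebra_simps)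
    then have "P x / U x \<le> 2 * e1 + (1 + \<delta>) * W + e1" using ux by (simp add: divide_le_eq)
    then show ?case using e1 dW by (simp add: W_def algebra_simps)
  qed
qed

end


context cd2 begin

lemma Ih_Un_disj:
  assumes h: "integrable M (\<lambda>\<omega>. h (\<eta> \<omega>))" and B: "B1 \<inter> B2 = {}" "B1 \<in> sets borel" "B2 \<in> sets borel"
  shows "Ih h (B1 \<union> B2) = Ih h B1 + Ih h B2"
proof -
  have "Ih h (B1 \<union> B2) = (\<integral>\<omega>. indicator B1 (\<eta> \<omega>) * h (\<eta> \<omega>) + indicator B2 (\<eta> \<omega>) * h (\<eta> \<omega>) \<partial>M)"
    unfolding Ih_def using B(1) by (intro Bochner_Integration.integral_cong) (auto simp: indicator_def)
  also have "\<dots> = Ih h B1 + Ih h B2"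
    unfolding Ih_def by (intro Bochner_Integration.integral_add int_ind h B(2,3))
  finally show ?thesis .
qed

lemma tail_small:
  assumes h: "integrable M (\<lambda>\<omega>. h (\<eta> \<omega>))" and hp: "\<And>y. y > 0 \<Longrightarrow> h y \<ge> 0" and e: "e > 0"
  shows "\<exists>B0\<ge>1. \<forall>B\<ge>B0. Ih h {B..} \<le> e"
proof -
  define V where "V = (\<integral>\<omega>. h (\<eta> \<omega>) \<partial>M)"
  have "eventually (\<lambda>n. Ih h (cellseq n) > V - e) sequentially"
    using Ih_exhaust[OF h] e unfolding V_def by (intro order_tendstoD(1)) auto
  then obtain n where n: "Ih h (cellseq n) > V - e" by (auto simp: eventually_sequentially)
  show ?thesis
  proof (intro exI[of _ "real n + 1"] conjI allI impI)
    show "1 \<le> real n + 1" by simp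
    fix B assume B: "real n + 1 \<le> B"
    have d: "cellseq n \<inter> {B..} = {}" using B by (auto simp: cellseq_def)
    have "Ih h (cellseq n) + Ih h {B..} = Ih h (cellseq n \<union> {B..})"
      by (rule Ih_Un_disj[OF h d, symmetric]) (auto simp: cellseq_def)
    also have "\<dots> \<le> Ih h UNIV" by (intro Ih_mono[OF h hp]) (auto simp: cellseq_def)
    also have "\<dots> = V" by (simp add: Ih_UNIV V_def)
    finally show "Ih h {B..} \<le> e" using n by simp
  qed
qed

lemma cell_lower_gen:
  assumes \<beta>: "\<beta> \<ge> 0" and Vint: "integrable M (\<lambda>\<omega>. \<eta> \<omega> powr \<beta> * s0 (\<eta> \<omega>))" and A: "A > 0" "q > 1"
  shows "(A*q^k) powr \<beta> * Ih s0 (cell A q k) \<le> Ih (\<lambda>y. y powr \<beta> * s0 y) (cell A q k)"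
proof -
  have cb: "cell A q k \<in> sets borel" by (simp add: cell_def)
  have i1: "integrable M (\<lambda>\<omega>. indicator (cell A q k) (\<eta> \<omega>) * (\<eta> \<omega> powr \<beta> * s0 (\<eta> \<omega>)))"
    using int_ind[of "\<lambda>y. y powr \<beta> * s0 y", OF _ cb] Vint by simp
  have i2: "integrable M (\<lambda>\<omega>. indicator (cell A q k) (\<eta> \<omega>) * (c * s0 (\<eta> \<omega>)))" for c
    using int_ind[of "\<lambda>y. c * s0 y", OF _ cb] s0int by simp
  have "Ih (\<lambda>y. (A*q^k) powr \<beta> * s0 y) (cell A q k) \<le> Ih (\<lambda>y. y powr \<beta> * s0 y) (cell A q k)"
    unfolding Ih_def
  proof (rule integral_mono[OF i2 i1])
    fix \<omega> show "indicator (cell A q k) (\<eta> \<omega>) * ((A*q^k) powr \<beta> * s0 (\<eta> \<omega>)) \<le> indicator (cell A q k) (\<eta> \<omega>) * (\<eta> \<omega> powr \<beta> * s0 (\<eta> \<omega>))"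
    proof (cases "\<eta> \<omega> \<in> cell A q k")
      case True
      then have p: "\<eta> \<omega> > 0" using cell_pos[OF A] by blast
      have "(A*q^k) powr \<beta> \<le> \<eta> \<omega> powr \<beta>" using True A \<beta> by (intro powr_mono2) (auto simp: cell_def)
      then show ?thesis using True s0pos[OF p] by simp
    qed simp
  qed
  then show ?thesis by (simp add: Ih_cmult)
qed

lemma tail_generic:
  assumes \<beta>: "\<beta> \<ge> 0" and Vint: "integrable M (\<lambda>\<omega>. \<eta> \<omega> powr \<beta> * s0 (\<eta> \<omega>))" and C: "C \<ge> 0"
    and cutex: "\<And>t0. \<exists>cut. eventually (\<lambda>x. x / cut x \<ge> t0 \<and> cut x \<ge> 1 \<and>
          (\<forall>y. 1 \<le> y \<and> y \<le> cut x \<longrightarrow> U (x / y) \<le> C * y powr \<beta> * U x)) at_top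
        \<and> (\<forall>e>0. eventually (\<lambda>x. measure M {\<omega>\<in>space M. \<eta> \<omega> > cut x} \<le> e * U x) at_top)"
    and e: "e > 0"
  shows "\<exists>B0. \<forall>B\<ge>B0. eventually (\<lambda>x. measure M {\<omega>\<in>space M. \<xi> \<omega> > x / \<eta> \<omega> \<and> \<eta> \<omega> \<ge> B} \<le> e * U x) at_top"
proof -
  define hb where "hb y = y powr \<beta> * s0 y" for y
  have hbi: "integrable M (\<lambda>\<omega>. hb (\<eta> \<omega>))" using Vint by (simp add: hb_def)
  have hbp: "\<And>y. y > 0 \<Longrightarrow> hb y \<ge> 0" using s0pos by (simp add: hb_def less_imp_le)
  define K where "K = 3/2 * C * 2 powr \<beta>"
  have K: "K \<ge> 0" using C by (simp add: K_def)
  define e' where "e' = e / (2 * (K + 1))"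
  have e': "e' > 0" "K * e' \<le> e/2" using e K by (auto simp: e'_def field_simps)
  obtain B0 where B0: "B0 \<ge> 1" "\<forall>B\<ge>B0. Ih hb {B..} \<le> e'" using tail_small[OF hbi hbp e'(1)] by blast
  have half: "(0::real) < 1/2" "(1::real)/2 < 1" by auto
  obtain t0 where t0: "\<forall>t\<ge>t0. \<forall>a b. 0 < a \<longrightarrow> a \<le> b \<longrightarrow> nu t {a..<b} \<le> (1+1/2) * U t * Ih s0 {a..<b}
             \<and> (1-1/2) * U t * Ih s0 {a..<b} \<le> nu t {a..<b}" using step1[OF half] by blast
  then have t0u: "\<forall>t\<ge>t0. \<forall>a b. 0 < a \<longrightarrow> a \<le> b \<longrightarrow> nu t {a..<b} \<le> (3/2) * U t * Ih s0 {a..<b}" by auto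
  obtain cut where cut1: "eventually (\<lambda>x. x / cut x \<ge> t0 \<and> cut x \<ge> 1 \<and>
          (\<forall>y. 1 \<le> y \<and> y \<le> cut x \<longrightarrow> U (x / y) \<le> C * y powr \<beta> * U x)) at_top"
    and cut2: "\<forall>e>0. eventually (\<lambda>x. measure M {\<omega>\<in>space M. \<eta> \<omega> > cut x} \<le> e * U x) at_top"
    using cutex[of t0] by blast
  have ev2: "eventually (\<lambda>x. measure M {\<omega>\<in>space M. \<eta> \<omega> > cut x} \<le> e/2 * U x) at_top"
    using cut2[rule_format, of "e/2"] e by simp
  show ?thesis
  proof (intro exI[of _ B0] allI impI)
    fix B assume BB0: "B \<ge> B0"
    have B: "B \<ge> 1" "B > 0" using B0 BB0 by auto
    have tailB: "Ih hb {B..} \<le> e'" using B0 BB0 by auto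
    have ev0: "eventually (\<lambda>x::real. x > 0) at_top" by (rule eventually_gt_at_top)
    show "eventually (\<lambda>x. measure M {\<omega>\<in>space M. \<xi> \<omega> > x / \<eta> \<omega> \<and> \<eta> \<omega> \<ge> B} \<le> e * U x) at_top"
      using ev0 cut1 ev2
    proof eventually_elim
      case (elim x)
      have x: "x > 0" using elim by simp
      have c1: "cut x \<ge> 1" and ct: "x / cut x \<ge> t0" using elim by auto
      have pot: "\<And>y. 1 \<le> y \<Longrightarrow> y \<le> cut x \<Longrightarrow> U (x / y) \<le> C * y powr \<beta> * U x" using elim by auto
      have ux: "U x > 0" by (rule Upos)
      obtain m where m: "cut x / B < 2^m" using real_arch_pow[of 2 "cut x / B"] by auto
      have mB: "cut x < B * 2^m" using m B by (simp add: divide_less_eq mult.commute)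
      define R1 where "R1 = {\<omega>\<in>space M. \<xi> \<omega> > x / \<eta> \<omega> \<and> \<eta> \<omega> \<in> {B..<B*2^m} \<and> \<eta> \<omega> \<le> cut x}"
      define R2 where "R2 = {\<omega>\<in>space M. \<eta> \<omega> > cut x}"
      have sets: "R1 \<in> sets M" "R2 \<in> sets M" unfolding R1_def R2_def by measurable
      have "measure M {\<omega>\<in>space M. \<xi> \<omega> > x / \<eta> \<omega> \<and> \<eta> \<omega> \<ge> B} \<le> measure M (R1 \<union> R2)"
        using sets mB by (intro finite_measure_mono) (auto simp: R1_def R2_def not_less)
      also have "\<dots> \<le> measure M R1 + measure M R2" using sets by (rule measure_Un_le)
      finally have sum: "measure M {\<omega>\<in>space M. \<xi> \<omega> > x / \<eta> \<omega> \<and> \<eta> \<omega> \<ge> B} \<le> measure M R1 + measure M R2" .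
      have r2: "measure M R2 \<le> e/2 * U x" using elim by (simp add: R2_def)
      have two: "(1::real) < 2" by simp
      have cut0: "cut x > 0" using c1 by simp
      have "measure M R1 \<le> (\<Sum>k<m. (3/2) * U (x / min (B*2^(Suc k)) (cut x)) * Ih s0 (cell B 2 k))"
        unfolding R1_def by (rule grid_upper[OF t0u B(2) two cut0 x ct])
      also have "\<dots> \<le> (\<Sum>k<m. K * Ih hb (cell B 2 k) * U x)"
      proof (rule sum_mono)
        fix k assume "k \<in> {..<m}"
        define mk where "mk = min (B*2^(Suc k)) (cut x)"
        have p2: "(1::real) \<le> 2^(Suc k)" by (rule one_le_power) simp
        have "1 \<le> B*2^(Suc k)" using B p2 by (metis mult_mono' one_le_numeral order.trans zero_le_one mult_1_left)
        then have mk1: "1 \<le> mk" "mk \<le> cut x" using c1 by (auto simp: mk_def)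
        have mk2: "mk \<le> 2 * (B*2^k)" by (simp add: mk_def)
        have Bk: "B*2^k > 0" using B by simp
        have "cell B 2 k \<subseteq> {0<..}" using cell_pos[OF B(2) two] by blast
        then have Sk0: "Ih s0 (cell B 2 k) \<ge> 0" by (rule S_nonneg) (simp add: cell_def)
        have pw: "mk powr \<beta> \<le> 2 powr \<beta> * (B*2^k) powr \<beta>"
        proof -
          have "mk powr \<beta> \<le> (2 * (B*2^k)) powr \<beta>" using mk1 mk2 \<beta> by (intro powr_mono2) auto
          also have "\<dots> = 2 powr \<beta> * (B*2^k) powr \<beta>" using Bk by (simp add: powr_mult)
          finally show ?thesis .
        qed
        have "U (x / mk) \<le> C * mk powr \<beta> * U x" using pot mk1 by auto
        also have "\<dots> \<le> C * (2 powr \<beta> * (B*2^k) powr \<beta>) * U x" using pw C ux by (intro mult_right_mono mult_left_mono) auto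
        finally have Uk: "U (x / mk) \<le> C * (2 powr \<beta> * (B*2^k) powr \<beta>) * U x" .
        have cl: "(B*2^k) powr \<beta> * Ih s0 (cell B 2 k) \<le> Ih hb (cell B 2 k)"
          unfolding hb_def[abs_def] using cell_lower_gen[OF \<beta> Vint B(2) two, of k] .
        have "(3/2) * U (x / mk) * Ih s0 (cell B 2 k) \<le> (3/2) * (C * (2 powr \<beta> * (B*2^k) powr \<beta>) * U x) * Ih s0 (cell B 2 k)"
          using Uk Sk0 by (intro mult_right_mono mult_left_mono) auto
        also have "\<dots> = K * ((B*2^k) powr \<beta> * Ih s0 (cell B 2 k)) * U x" by (simp add: K_def algebra_simps)
        also have "\<dots> \<le> K * Ih hb (cell B 2 k) * U x" using cl K ux by (intro mult_right_mono mult_left_mono) auto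
        finally show "(3/2) * U (x / min (B*2^(Suc k)) (cut x)) * Ih s0 (cell B 2 k) \<le> K * Ih hb (cell B 2 k) * U x"
          by (simp add: mk_def)
      qed
      also have "\<dots> = K * Ih hb {B..<B*2^m} * U x"
        unfolding Ih_cells_sum[OF hbi B(2) two, symmetric] by (simp add: sum_distrib_left sum_distrib_right)
      also have "\<dots> \<le> K * e' * U x"
      proof -
        have "Ih hb {B..<B*2^m} \<le> Ih hb {B..}" by (intro Ih_mono[OF hbi hbp]) auto
        then have "Ih hb {B..<B*2^m} \<le> e'" using tailB by simp
        then show ?thesis using K ux by (intro mult_right_mono mult_left_mono) auto
      qed
      also have "\<dots> \<le> e/2 * U x" using e'(2) ux by (intro mult_right_mono) auto
      finally have r1: "measure M R1 \<le> e/2 * U x" .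
      show ?case using sum r1 r2 by simp
    qed
  qed
qed

end


lemma dyadic_interval:
  fixes y :: real assumes y: "1 \<le> y"
  shows "\<exists>j::nat. 2^j \<le> y \<and> y < 2^(Suc j)"
proof -
  obtain m where m: "y < 2^m" using real_arch_pow[of 2 y] by auto
  have "y < 2^m \<Longrightarrow> \<exists>j::nat. 2^j \<le> y \<and> y < 2^(Suc j)"
  proof (induction m)
    case 0 then show ?case using y by simp
  next
    case (Suc m)
    show ?case
    proof (cases "y < 2^m")
      case True then show ?thesis using Suc.IH by blast
    next
      case False then show ?thesis using Suc.prems by (intro exI[of _ m]) auto
    qed
  qed
  then show ?thesis using m by blast
qed

context cd2 begin

definition Gb where "Gb x = measure M {\<omega>\<in>space M. \<eta> \<omega> > x}"

lemma ccdf_G: "ccdf (distr M borel \<eta>) x = Gb x"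
  unfolding Gb_def by (rule ccdf_distr) measurable

lemma potter:
  assumes eps: "\<epsilon> > 0"
  shows "\<exists>x1\<ge>1. \<forall>x y. 1 \<le> y \<longrightarrow> y \<le> x / x1 \<longrightarrow> U (x / y) \<le> 2 powr (\<alpha>+\<epsilon>) * y powr (\<alpha>+\<epsilon>) * U x"
proof -
  define c where "c = 2 powr (\<alpha>+\<epsilon>)"
  have c1: "c \<ge> 1" using alpha eps unfolding c_def by (intro ge_one_powr_ge_zero) auto
  have l: "((\<lambda>t. U (t * (1/2)) / U t) \<longlongrightarrow> (1/2) powr (-\<alpha>)) at_top" using U_rv[of "1/2"] by simp
  have "(1/2::real) powr (-\<alpha>) = 2 powr \<alpha>" by (simp add: powr_minus_divide powr_divide)
  moreover have "2 powr \<alpha> < c" unfolding c_def using eps by (intro powr_less_mono) auto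
  ultimately have "eventually (\<lambda>t. U (t * (1/2)) / U t < c) at_top" using l by (intro order_tendstoD(2)) auto
  then obtain x1' where x1': "\<And>t. t \<ge> x1' \<Longrightarrow> U (t * (1/2)) / U t < c" unfolding eventually_at_top_linorder by auto
  define x1 where "x1 = max x1' 1"
  have step: "U (t / 2) \<le> c * U t" if "t \<ge> x1" for t
    using x1'[of t] that Upos[of t] by (simp add: x1_def divide_less_eq)
  have ind: "\<forall>x. x1 \<le> x / 2^j \<longrightarrow> U (x / 2^(Suc j)) \<le> c^(Suc j) * U x" for j
  proof (induction j)
    case 0 show ?case using step by simp
  next
    case (Suc j)
    show ?case
    proof (intro allI impI)
      fix x assume a: "x1 \<le> x / 2^(Suc j)"
      have x11: "x1 \<ge> 1" by (simp add: x1_def)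
      have "0 < x / 2^(Suc j)" using a x11 by linarith
      then have x0: "x > 0" by (simp add: zero_less_divide_iff)
      have "x / 2^(Suc j) \<le> x / 2^j" using x0 by (intro divide_left_mono) auto
      then have "U (x / 2^(Suc j)) \<le> c^(Suc j) * U x" using Suc.IH a by auto
      moreover have "U ((x / 2^(Suc j)) / 2) \<le> c * U (x / 2^(Suc j))" using step a by blast
      moreover have "(x / 2^(Suc j)) / 2 = x / 2^(Suc (Suc j))" by simp
      ultimately show "U (x / 2^(Suc (Suc j))) \<le> c^(Suc (Suc j)) * U x"
        using c1 by (simp add: mult_left_mono order_trans[OF _ mult_left_mono] mult.assoc)
    qed
  qed
  show ?thesis
  proof (intro exI[of _ x1] conjI allI impI)
    show "1 \<le> x1" by (simp add: x1_def)
    fix x y assume y1: "1 \<le> y" and yx: "y \<le> x / x1"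
    have x1p: "x1 > 0" by (simp add: x1_def)
    have "x1 \<le> x / y" using yx y1 x1p by (simp add: field_simps)
    have "0 < x / x1" using yx y1 by linarith
    then have x0: "x > 0" using x1p by (simp add: zero_less_divide_iff)
    obtain j where j: "2^j \<le> y" "y < 2^(Suc j)" using dyadic_interval[OF y1] by blast
    have "x / y \<le> x / 2^j" using x0 j(1) y1 by (intro divide_left_mono) auto
    then have xj: "x1 \<le> x / 2^j" using \<open>x1 \<le> x / y\<close> by linarith
    have "x / 2^(Suc j) \<le> x / y" using x0 j y1 by (intro divide_left_mono) auto
    then have "U (x / y) \<le> U (x / 2^(Suc j))" by (rule U_antimono)
    also have "\<dots> \<le> c^(Suc j) * U x" using ind xj by blast
    also have "c^(Suc j) = c * (2^j) powr (\<alpha>+\<epsilon>)"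
    proof -
      have "c^j = (2 powr (\<alpha>+\<epsilon>)) powr (real j)" by (simp add: c_def powr_realpow)
      also have "\<dots> = (2 powr (real j)) powr (\<alpha>+\<epsilon>)" by (simp add: powr_powr mult.commute)
      also have "\<dots> = (2^j) powr (\<alpha>+\<epsilon>)" by (simp add: powr_realpow)
      finally show ?thesis by simp
    qed
    also have "c * (2^j) powr (\<alpha>+\<epsilon>) * U x \<le> c * y powr (\<alpha>+\<epsilon>) * U x"
      using j(1) alpha eps c1 Upos[of x] by (intro mult_right_mono mult_left_mono powr_mono2) auto
    finally show "U (x / y) \<le> 2 powr (\<alpha>+\<epsilon>) * y powr (\<alpha>+\<epsilon>) * U x" by (simp add: c_def)
  qed
qed

lemma case_i_cut:
  assumes eps: "\<epsilon> > 0"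
    and Gs: "((\<lambda>x. Gb x / Fb x) \<longlongrightarrow> 0) at_top"
  shows "\<exists>cut. eventually (\<lambda>x. x / cut x \<ge> t0 \<and> cut x \<ge> 1 \<and>
          (\<forall>y. 1 \<le> y \<and> y \<le> cut x \<longrightarrow> U (x / y) \<le> 2 powr (\<alpha>+\<epsilon>) * y powr (\<alpha>+\<epsilon>) * U x)) at_top
        \<and> (\<forall>e>0. eventually (\<lambda>x. measure M {\<omega>\<in>space M. \<eta> \<omega> > cut x} \<le> e * U x) at_top)"
proof -
  obtain x1 where x1: "x1 \<ge> 1" "\<forall>x y. 1 \<le> y \<longrightarrow> y \<le> x / x1 \<longrightarrow> U (x / y) \<le> 2 powr (\<alpha>+\<epsilon>) * y powr (\<alpha>+\<epsilon>) * U x"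
    using potter[OF eps] by blast
  define t1 where "t1 = max (max t0 x1) 1"
  have t1: "t1 \<ge> t0" "t1 \<ge> x1" "t1 \<ge> 1" "t1 > 0" by (auto simp: t1_def)
  show ?thesis
  proof (intro exI[of _ "\<lambda>x. x / t1"] conjI allI impI)
    show "eventually (\<lambda>x. x / (x / t1) \<ge> t0 \<and> x / t1 \<ge> 1 \<and>
          (\<forall>y. 1 \<le> y \<and> y \<le> x / t1 \<longrightarrow> U (x / y) \<le> 2 powr (\<alpha>+\<epsilon>) * y powr (\<alpha>+\<epsilon>) * U x)) at_top"
      using eventually_ge_at_top[of t1]
    proof eventually_elim
      case (elim x)
      have x0: "x > 0" using elim t1 by simp
      have "x / (x / t1) = t1" using x0 t1 by simp
      moreover have "x / t1 \<ge> 1" using elim t1 by simp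
      moreover have "x / t1 \<le> x / x1" using x0 t1 x1 by (intro divide_left_mono) auto
      ultimately show ?case using t1 x1(2) by auto
    qed
    fix e :: real assume e: "e > 0"
    define e2 where "e2 = e / (2 * t1 powr \<alpha>)"
    have e2: "e2 > 0" using e t1 by (simp add: e2_def)
    have lim: "((\<lambda>x. Gb (x * (1/t1)) / Fb (x * (1/t1))) \<longlongrightarrow> 0) at_top"
      using filterlim_compose[OF Gs filterlim_times_const[of "1/t1"]] t1 by simp
    have ev1: "eventually (\<lambda>x. Gb (x * (1/t1)) / Fb (x * (1/t1)) < e2) at_top"
      using order_tendstoD(2)[OF lim e2] .
    have t1i: "0 < 1/t1" using t1 by simp
    have ev2: "eventually (\<lambda>x. Fb (x * (1/t1)) > 0) at_top"
      using filterlim_iff[THEN iffD1, OF filterlim_times_const[OF t1i], rule_format, OF Fb_pos_ev] .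
    have ev3: "eventually (\<lambda>x. U (x / t1) \<le> (1+1) * t1 powr \<alpha> * U x) at_top"
      using U_ev_upper[OF t1(4), of 1] by simp
    show "eventually (\<lambda>x. measure M {\<omega>\<in>space M. \<eta> \<omega> > x / t1} \<le> e * U x) at_top"
      using ev1 ev2 ev3
    proof eventually_elim
      case (elim x)
      have "Gb (x / t1) \<le> e2 * Fb (x / t1)" using elim(1,2) by (simp add: divide_less_eq less_imp_le)
      also have "\<dots> \<le> e2 * U (x / t1)" using e2 Fb_le_U by (intro mult_left_mono) auto
      also have "\<dots> \<le> e2 * (2 * t1 powr \<alpha> * U x)" using elim(3) e2 by (intro mult_left_mono) auto
      also have "\<dots> = e * U x" using t1 by (simp add: e2_def)
      finally show ?case by (simp add: Gb_def)
    qed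
  qed
qed

lemma case_ii_cut:
  fixes L g :: "real \<Rightarrow> real"
  assumes gpos: "\<forall>x>0. g x > 0" and g0: "(g \<longlongrightarrow> 0) at_top"
    and xg: "filterlim (\<lambda>x. x * g x) at_top at_top"
    and Gs: "((\<lambda>x. Gb (x * g x) / Fb x) \<longlongrightarrow> 0) at_top"
    and Lc: "eventually (\<lambda>x. \<forall>y. 1 \<le> y \<and> y \<le> x * g x \<longrightarrow> L (x / y) / L x \<le> C) at_top"
    and Lsv: "slowly_varying L"
    and FL: "Fb \<sim>[at_top] (\<lambda>x. x powr (-\<alpha>) * L x)"
  shows "\<exists>cut. eventually (\<lambda>x. x / cut x \<ge> t0 \<and> cut x \<ge> 1 \<and>
          (\<forall>y. 1 \<le> y \<and> y \<le> cut x \<longrightarrow> U (x / y) \<le> (4 * max C 0) * y powr \<alpha> * U x)) at_top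
        \<and> (\<forall>e>0. eventually (\<lambda>x. measure M {\<omega>\<in>space M. \<eta> \<omega> > cut x} \<le> e * U x) at_top)"
proof -
  have Lp: "\<And>x. x > 0 \<Longrightarrow> L x > 0" using Lsv by (simp add: slowly_varying_def)
  have "eventually (\<lambda>x. Fb x \<noteq> 0 \<or> x powr (-\<alpha>) * L x \<noteq> 0) at_top"
    using Fb_pos_ev by eventually_elim auto
  from asymp_equivD_strong[OF FL this]
  have f1: "((\<lambda>x. Fb x / (x powr (-\<alpha>) * L x)) \<longlongrightarrow> 1) at_top" .
  have f2: "((\<lambda>x. inverse (Fb x / U x) * (Fb x / (x powr (-\<alpha>) * L x))) \<longlongrightarrow> inverse 1 * 1) at_top"
    by (intro tendsto_intros FU f1) auto
  have eq: "eventually (\<lambda>x. inverse (Fb x / U x) * (Fb x / (x powr (-\<alpha>) * L x)) = U x / (x powr (-\<alpha>) * L x)) at_top"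
    using Fb_pos_ev
  proof eventually_elim
    case (elim x)
    have "U x > 0" by (rule Upos)
    then show ?case using elim by (simp add: field_simps)
  qed
  have "((\<lambda>x. U x / (x powr (-\<alpha>) * L x)) \<longlongrightarrow> inverse 1 * 1) at_top"
    using tendsto_cong[OF eq] f2 by blast
  then have UL: "((\<lambda>x. U x / (x powr (-\<alpha>) * L x)) \<longlongrightarrow> 1) at_top" by simp
  have "eventually (\<lambda>t. U t / (t powr (-\<alpha>) * L t) > 1/2 \<and> U t / (t powr (-\<alpha>) * L t) < 2) at_top"
    using UL by (intro eventually_conj order_tendstoD) auto
  then obtain T0 where T0: "\<And>t. t \<ge> T0 \<Longrightarrow> U t / (t powr (-\<alpha>) * L t) > 1/2 \<and> U t / (t powr (-\<alpha>) * L t) < 2"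
    unfolding eventually_at_top_linorder by auto
  define T where "T = max T0 1"
  have TB: "U t < 2 * (t powr (-\<alpha>) * L t)" "U t > 1/2 * (t powr (-\<alpha>) * L t)" if "t \<ge> T" for t
  proof -
    have t0: "t > 0" using that by (simp add: T_def)
    have d: "t powr (-\<alpha>) * L t > 0" using t0 Lp[OF t0] by simp
    have "U t / (t powr (-\<alpha>) * L t) > 1/2 \<and> U t / (t powr (-\<alpha>) * L t) < 2" using T0 that by (simp add: T_def)
    then show "U t < 2 * (t powr (-\<alpha>) * L t)" "U t > 1/2 * (t powr (-\<alpha>) * L t)" using d
      by (simp_all add: divide_less_eq less_divide_eq)
  qed
  define C' where "C' = max C 0"
  show ?thesis
  proof (intro exI[of _ "\<lambda>x. x * g x"] conjI allI impI)
    define m where "m = max t0 T"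
    have m: "m > 0" "m \<ge> t0" "m \<ge> T" by (auto simp: m_def T_def)
    have evg: "eventually (\<lambda>x. g x < 1/m) at_top" using g0 m by (intro order_tendstoD(2)) auto
    have evxg: "eventually (\<lambda>x. x * g x \<ge> 1) at_top" using xg by (simp add: filterlim_at_top)
    show "eventually (\<lambda>x. x / (x * g x) \<ge> t0 \<and> x * g x \<ge> 1 \<and>
          (\<forall>y. 1 \<le> y \<and> y \<le> x * g x \<longrightarrow> U (x / y) \<le> (4 * max C 0) * y powr \<alpha> * U x)) at_top"
      using evg evxg Lc eventually_ge_at_top[of T]
    proof eventually_elim
      case (elim x)
      have x0: "x > 0" using elim(4) by (simp add: T_def)
      have gx: "g x > 0" using gpos x0 by simp
      have ig: "1 / g x > m" using elim(1) gx m by (simp add: field_simps)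
      have xx: "x / (x * g x) = 1 / g x" using x0 by simp
      have pot: "U (x / y) \<le> (4 * C') * y powr \<alpha> * U x" if y: "1 \<le> y" "y \<le> x * g x" for y
      proof -
        have y0: "y > 0" using y by simp
        have "x / (x * g x) \<le> x / y" using x0 y0 y gx by (intro divide_left_mono) auto
        then have xyT: "x / y \<ge> T" using ig xx m by simp
        have xy0: "x / y > 0" using x0 y0 by simp
        have Lxy: "L (x / y) \<le> C' * L x"
        proof -
          have "L (x / y) / L x \<le> C" using elim(3) y by blast
          then have "L (x / y) \<le> C * L x" using Lp[OF x0] by (simp add: divide_le_eq)
          moreover have "C * L x \<le> C' * L x" using Lp[OF x0] by (intro mult_right_mono) (auto simp: C'_def)
          ultimately show ?thesis by linarith
        qed
        have pw: "(x / y) powr (-\<alpha>) = x powr (-\<alpha>) * y powr \<alpha>"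
          using x0 y0 by (simp add: powr_divide powr_minus_divide)
        have "U (x / y) < 2 * ((x / y) powr (-\<alpha>) * L (x / y))" using TB(1)[OF xyT] .
        also have "\<dots> \<le> 2 * ((x / y) powr (-\<alpha>) * (C' * L x))"
          using Lxy by (intro mult_left_mono) auto
        also have "\<dots> = 2 * C' * y powr \<alpha> * (x powr (-\<alpha>) * L x)" unfolding pw by (simp add: algebra_simps)
        also have "\<dots> \<le> 2 * C' * y powr \<alpha> * (2 * U x)"
        proof -
          have "x powr (-\<alpha>) * L x < 2 * U x" using TB(2)[OF elim(4)] by simp
          then show ?thesis by (intro mult_left_mono) (auto simp: C'_def)
        qed
        finally show ?thesis by (simp add: algebra_simps)
      qed
      show ?case using xx ig m pot elim(2) by (auto simp: C'_def)
    qed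
    fix e :: real assume e: "e > 0"
    show "eventually (\<lambda>x. measure M {\<omega>\<in>space M. \<eta> \<omega> > x * g x} \<le> e * U x) at_top"
      using order_tendstoD(2)[OF Gs e] Fb_pos_ev
    proof eventually_elim
      case (elim x)
      have "Gb (x * g x) \<le> e * Fb x" using elim by (simp add: divide_less_eq less_imp_le)
      also have "\<dots> \<le> e * U x" using e Fb_le_U by (intro mult_left_mono) auto
      finally show ?case by (simp add: Gb_def)
    qed
  qed
qed

lemma W_pos:
  assumes Wint: "integrable M (\<lambda>\<omega>. ha (\<eta> \<omega>))"
  shows "(\<integral>\<omega>. ha (\<eta> \<omega>) \<partial>M) > 0"
proof -
  have nn: "AE \<omega> in M. 0 \<le> ha (\<eta> \<omega>)" using etapos by eventually_elim (rule ha_nonneg)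
  have "(\<integral>\<omega>. ha (\<eta> \<omega>) \<partial>M) \<noteq> 0"
  proof
    assume "(\<integral>\<omega>. ha (\<eta> \<omega>) \<partial>M) = 0"
    then have "AE \<omega> in M. ha (\<eta> \<omega>) = 0" using integral_nonneg_eq_0_iff_AE[OF Wint nn] by simp
    then have "AE \<omega> in M. False" using etapos
    proof eventually_elim
      case (elim \<omega>)
      then show False using s0pos[of "\<eta> \<omega>"] by (simp add: ha_def)
    qed
    then show False by simp
  qed
  moreover have "(\<integral>\<omega>. ha (\<eta> \<omega>) \<partial>M) \<ge> 0" by (rule integral_nonneg_AE[OF nn])
  ultimately show ?thesis by simp
qed

lemma main_lim:
  assumes Wint: "integrable M (\<lambda>\<omega>. ha (\<eta> \<omega>))"
    and tailP: "\<And>e. e > 0 \<Longrightarrow> \<exists>B0. \<forall>B\<ge>B0. eventually (\<lambda>x. measure M {\<omega>\<in>space M. \<xi> \<omega> > x / \<eta> \<omega> \<and> \<eta> \<omega> \<ge> B} \<le> e * U x) at_top"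
  shows "P \<sim>[at_top] (\<lambda>x. (\<integral>\<omega>. ha (\<eta> \<omega>) \<partial>M) * Fb x)"
proof -
  define W where "W = (\<integral>\<omega>. ha (\<eta> \<omega>) \<partial>M)"
  have W: "W > 0" unfolding W_def by (rule W_pos[OF Wint])
  have PU: "((\<lambda>x. P x / U x) \<longlongrightarrow> W) at_top"
  proof (rule tendsto_from_bounds)
    fix e :: real assume "e > 0"
    then show "eventually (\<lambda>x. W - e \<le> P x / U x \<and> P x / U x \<le> W + e) at_top"
      using lower_ev[OF Wint] upper_ev[OF Wint _ tailP] unfolding W_def by (auto intro: eventually_conj)
  qed
  have l: "((\<lambda>x. (P x / U x) * inverse (Fb x / U x) / W) \<longlongrightarrow> W * inverse 1 / W) at_top"
    by (intro tendsto_intros PU FU) (use W in auto)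
  have eq: "eventually (\<lambda>x. (P x / U x) * inverse (Fb x / U x) / W = P x / (W * Fb x)) at_top"
    using Fb_pos_ev
  proof eventually_elim
    case (elim x)
    have "U x > 0" by (rule Upos)
    then show ?case using elim W by (simp add: field_simps)
  qed
  have "((\<lambda>x. P x / (W * Fb x)) \<longlongrightarrow> W * inverse 1 / W) at_top"
    using tendsto_cong[OF eq] l by blast
  then have "((\<lambda>x. P x / (W * Fb x)) \<longlongrightarrow> 1) at_top" using W by simp
  then show ?thesis unfolding W_def by (rule asymp_equivI')
qed

end


theorem corollary2p4:
  fixes M :: "'a measure" and \<xi> \<eta> :: "'a \<Rightarrow> real"
    and s0 s L g :: "real \<Rightarrow> real" and \<alpha> :: real
  assumes "prob_space M"
    and "\<xi> \<in> borel_measurable M" and "\<eta> \<in> borel_measurable M"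
    and "AE \<omega> in M. \<xi> \<omega> > 0" and "AE \<omega> in M. \<eta> \<omega> > 0"
    and "continuous_on {0<..} s0" and "\<forall>y>0. s0 y > 0"
    and "cond_dependent M \<xi> \<eta> s0"
    and "long_tailed (distr M borel \<xi>)"
    and "integrable M (\<lambda>\<omega>. s0 (\<eta> \<omega>))"
    and s_def: "s = (\<lambda>y. s0 y / (\<integral>\<omega>. s0 (\<eta> \<omega>) \<partial>M))"
    and "\<alpha> \<ge> 0"
    and "reg_var \<alpha> (distr M borel (\<lambda>\<omega>. \<xi> \<omega> - \<eta> \<omega>))"
    and "slowly_varying L"
    and "ccdf (distr M borel (\<lambda>\<omega>. \<xi> \<omega> - \<eta> \<omega>)) \<sim>[at_top] (\<lambda>x. x powr (- \<alpha>) * L x)"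
    and "((\<lambda>x. ccdf (distr M borel \<eta>) x / ccdf (distr M borel (\<lambda>\<omega>. \<xi> \<omega> - \<eta> \<omega>)) x)
            \<longlongrightarrow> 0) at_top"
    and "(\<exists>\<epsilon>>0. integrable M (\<lambda>\<omega>. \<eta> \<omega> powr (\<alpha> + \<epsilon>) * s (\<eta> \<omega>)))
         \<or> ((\<forall>x>0. g x > 0) \<and> antimono_on {0<..} g \<and> (g \<longlongrightarrow> 0) at_top \<and>
            mono_on {0<..} (\<lambda>x. x * g x) \<and> filterlim (\<lambda>x. x * g x) at_top at_top \<and>
            ((\<lambda>x. ccdf (distr M borel \<eta>) (x * g x)
                   / ccdf (distr M borel (\<lambda>\<omega>. \<xi> \<omega> - \<eta> \<omega>)) x) \<longlongrightarrow> 0) at_top \<and>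
            (\<exists>C. \<forall>\<^sub>F x in at_top. \<forall>y. 1 \<le> y \<and> y \<le> x * g x \<longrightarrow> L (x / y) / L x \<le> C) \<and>
            integrable M (\<lambda>\<omega>. \<eta> \<omega> powr \<alpha> * s (\<eta> \<omega>)))"
  shows "(\<lambda>x. measure M {\<omega> \<in> space M. (\<xi> \<omega> - \<eta> \<omega>) * \<eta> \<omega> > x})
           \<sim>[at_top] (\<lambda>x. (\<integral>\<omega>. \<eta> \<omega> powr \<alpha> * s (\<eta> \<omega>) \<partial>M)
                          * ccdf (distr M borel (\<lambda>\<omega>. \<xi> \<omega> - \<eta> \<omega>)) x)"
proof -
  note A = assms
  have cd2inst: "cd2 M \<xi> \<eta> s0 \<alpha>"
  proof (intro cd2.intro cdsetup.intro cdsetup_axioms.intro cd2_axioms.intro)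
    show "\<And>y. 0 < y \<Longrightarrow> 0 < s0 y" using A(7) by auto
  qed (use A in auto)
  interpret c: cd2 M \<xi> \<eta> s0 \<alpha> by (rule cd2inst)
  have Z: "(\<integral>\<omega>. s0 (\<eta> \<omega>) \<partial>M) = 1" by (rule c.Z1)
  have ss: "s = s0" using s_def Z by auto
  have Fbeq: "ccdf (distr M borel (\<lambda>\<omega>. \<xi> \<omega> - \<eta> \<omega>)) = c.Fb" by (rule ext) (rule c.ccdf_F)
  have Gbeq: "ccdf (distr M borel \<eta>) = c.Gb" by (rule ext) (rule c.ccdf_G)
  have Gs: "((\<lambda>x. c.Gb x / c.Fb x) \<longlongrightarrow> 0) at_top" using A(16) unfolding Fbeq Gbeq .
  have s0m[measurable]: "(\<lambda>\<omega>. s0 (\<eta> \<omega>)) \<in> borel_measurable M"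
    using A(10) by (rule borel_measurable_integrable)
  have haeq: "(\<lambda>\<omega>. c.ha (\<eta> \<omega>)) = (\<lambda>\<omega>. \<eta> \<omega> powr \<alpha> * s (\<eta> \<omega>))"
    by (rule ext) (simp add: c.ha_def ss)
  have key: "integrable M (\<lambda>\<omega>. c.ha (\<eta> \<omega>)) \<and> (\<forall>e>0. \<exists>B0. \<forall>B\<ge>B0. eventually (\<lambda>x. measure M {\<omega>\<in>space M. \<xi> \<omega> > x / \<eta> \<omega> \<and> \<eta> \<omega> \<ge> B} \<le> e * c.U x) at_top)"
    using A(17)
  proof (elim disjE)
    assume "\<exists>\<epsilon>>0. integrable M (\<lambda>\<omega>. \<eta> \<omega> powr (\<alpha> + \<epsilon>) * s (\<eta> \<omega>))"
    then obtain \<epsilon> :: real where eps: "\<epsilon> > 0" and Vi: "integrable M (\<lambda>\<omega>. \<eta> \<omega> powr (\<alpha> + \<epsilon>) * s (\<eta> \<omega>))" by blast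
    have Vint: "integrable M (\<lambda>\<omega>. \<eta> \<omega> powr (\<alpha> + \<epsilon>) * s0 (\<eta> \<omega>))" using Vi by (simp add: ss)
    have Wint: "integrable M (\<lambda>\<omega>. c.ha (\<eta> \<omega>))"
    proof (rule Bochner_Integration.integrable_bound[OF Bochner_Integration.integrable_add[OF A(10) Vint]])
      show "(\<lambda>\<omega>. c.ha (\<eta> \<omega>)) \<in> borel_measurable M" unfolding c.ha_def by measurable
      show "AE \<omega> in M. norm (c.ha (\<eta> \<omega>)) \<le> norm (s0 (\<eta> \<omega>) + \<eta> \<omega> powr (\<alpha> + \<epsilon>) * s0 (\<eta> \<omega>))"
        using A(5)
      proof eventually_elim
        case (elim \<omega>)
        define y where "y = \<eta> \<omega>"
        have y: "y > 0" using elim by (simp add: y_def)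
        have sy: "s0 y > 0" using A(7) y by auto
        have "y powr \<alpha> \<le> 1 + y powr (\<alpha> + \<epsilon>)"
        proof (cases "y \<le> 1")
          case True
          then have "y powr \<alpha> \<le> 1" using y A(12) by (intro powr_le1) auto
          then show ?thesis by (smt (verit) powr_ge_zero)
        next
          case False
          then have "y powr \<alpha> \<le> y powr (\<alpha> + \<epsilon>)" using eps by (intro powr_mono) auto
          then show ?thesis by simp
        qed
        then have "y powr \<alpha> * s0 y \<le> (1 + y powr (\<alpha> + \<epsilon>)) * s0 y" using sy by (intro mult_right_mono) auto
        then show ?case using sy by (simp add: c.ha_def y_def[symmetric] algebra_simps)
      qed
    qed
    have tail: "\<forall>e>0. \<exists>B0. \<forall>B\<ge>B0. eventually (\<lambda>x. measure M {\<omega>\<in>space M. \<xi> \<omega> > x / \<eta> \<omega> \<and> \<eta> \<omega> \<ge> B} \<le> e * c.U x) at_top"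
    proof (intro allI impI)
      fix e :: real assume e: "e > 0"
      show "\<exists>B0. \<forall>B\<ge>B0. eventually (\<lambda>x. measure M {\<omega>\<in>space M. \<xi> \<omega> > x / \<eta> \<omega> \<and> \<eta> \<omega> \<ge> B} \<le> e * c.U x) at_top"
        by (rule c.tail_generic[where \<beta>="\<alpha>+\<epsilon>" and C="2 powr (\<alpha>+\<epsilon>)", OF _ Vint _ c.case_i_cut[OF eps Gs] e])
          (use A(12) eps in auto)
    qed
    show ?thesis using Wint tail by blast
  next
    assume H: "(\<forall>x>0. g x > 0) \<and> antimono_on {0<..} g \<and> (g \<longlongrightarrow> 0) at_top \<and>
            mono_on {0<..} (\<lambda>x. x * g x) \<and> filterlim (\<lambda>x. x * g x) at_top at_top \<and>
            ((\<lambda>x. ccdf (distr M borel \<eta>) (x * g x)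
                   / ccdf (distr M borel (\<lambda>\<omega>. \<xi> \<omega> - \<eta> \<omega>)) x) \<longlongrightarrow> 0) at_top \<and>
            (\<exists>C. \<forall>\<^sub>F x in at_top. \<forall>y. 1 \<le> y \<and> y \<le> x * g x \<longrightarrow> L (x / y) / L x \<le> C) \<and>
            integrable M (\<lambda>\<omega>. \<eta> \<omega> powr \<alpha> * s (\<eta> \<omega>))"
    then have gpos: "\<forall>x>0. 0 < g x" and g0: "(g \<longlongrightarrow> 0) at_top"
      and xg: "filterlim (\<lambda>x. x * g x) at_top at_top"
      and Gs2: "((\<lambda>x. ccdf (distr M borel \<eta>) (x * g x) / ccdf (distr M borel (\<lambda>\<omega>. \<xi> \<omega> - \<eta> \<omega>)) x) \<longlongrightarrow> 0) at_top"
      and LC: "\<exists>C. \<forall>\<^sub>F x in at_top. \<forall>y. 1 \<le> y \<and> y \<le> x * g x \<longrightarrow> L (x / y) / L x \<le> C"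
      and Wi: "integrable M (\<lambda>\<omega>. \<eta> \<omega> powr \<alpha> * s (\<eta> \<omega>))" by blast+
    obtain C where C: "\<forall>\<^sub>F x in at_top. \<forall>y. 1 \<le> y \<and> y \<le> x * g x \<longrightarrow> L (x / y) / L x \<le> C" using LC by blast
    have Wint: "integrable M (\<lambda>\<omega>. c.ha (\<eta> \<omega>))" using Wi haeq by simp
    have Vint: "integrable M (\<lambda>\<omega>. \<eta> \<omega> powr \<alpha> * s0 (\<eta> \<omega>))" using Wi by (simp add: ss)
    have Gs2': "((\<lambda>x. c.Gb (x * g x) / c.Fb x) \<longlongrightarrow> 0) at_top" using Gs2 unfolding Fbeq Gbeq .
    have FL: "c.Fb \<sim>[at_top] (\<lambda>x. x powr (-\<alpha>) * L x)" using A(15) unfolding Fbeq .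
    have tail: "\<forall>e>0. \<exists>B0. \<forall>B\<ge>B0. eventually (\<lambda>x. measure M {\<omega>\<in>space M. \<xi> \<omega> > x / \<eta> \<omega> \<and> \<eta> \<omega> \<ge> B} \<le> e * c.U x) at_top"
    proof (intro allI impI)
      fix e :: real assume e: "e > 0"
      show "\<exists>B0. \<forall>B\<ge>B0. eventually (\<lambda>x. measure M {\<omega>\<in>space M. \<xi> \<omega> > x / \<eta> \<omega> \<and> \<eta> \<omega> \<ge> B} \<le> e * c.U x) at_top"
        by (rule c.tail_generic[where \<beta>="\<alpha>" and C="4 * max C 0", OF _ Vint _ c.case_ii_cut[OF gpos g0 xg Gs2' C A(14) FL] e])
          (use A(12) in auto)
    qed
    show ?thesis using Wint tail by blast
  qed
  have main: "c.P \<sim>[at_top] (\<lambda>x. (\<integral>\<omega>. c.ha (\<eta> \<omega>) \<partial>M) * c.Fb x)"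
    using key by (intro c.main_lim) auto
  have Peq: "c.P = (\<lambda>x. measure M {\<omega> \<in> space M. (\<xi> \<omega> - \<eta> \<omega>) * \<eta> \<omega> > x})"
    by (rule ext) (simp add: c.P_def)
  show ?thesis using main unfolding Peq Fbeq haeq .
qed


end
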